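(* Let $1<p_0<p<\infty$, $p'=p/(p-1)$, and let $f,g$ be nonnegative sequences on $\mathbb{Z}_+$. Assume there is a positive increasing function $\varphi_{p_0}$ on $[1,\infty)$ such that for every $w_0\in\mathcal{A}_{p_0}$, $$\Big(\sum_{k=1}^\infty w_0(k)f(k)^{p_0}\Big)^{1/p_0}\le\varphi_{p_0}\big([w_0]_{\mathcal{A}_{p_0}}\big)\Big(\sum_{k=1}^\infty w_0(k)g(k)^{p_0}\Big)^{1/p_0}.$$ Then for every $w\in\mathcal{A}_p$ with $f\in\ell^p(w)$, $$\Big(\sum_{k=1}^\infty w(k)f(k)^{p}\Big)^{1/p}\le 2^{\frac{p-p_0}{(p-1)p_0}}\,\varphi_{p_0}\Big(\big(2\|\mathcal{M}\|_{\ell^{p'}(w^{1-p'})}\big)^{\frac{p-p_0}{p-1}}[w]_{\mathcal{A}_p}^{\frac{p_0-1}{p-1}}\Big)\Big(\sum_{k=1}^\infty w(k)g(k)^{p}\Big)^{1/p}.$$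
   Context: Throughout, a weight is a sequence $w=\{w(k)\}_{k\ge 1}$ of strictly positive real numbers indexed by $\mathbb{Z}_+=\{1,2,\dots\}$. For $1\le q<\infty$ and a weight $v$, $\ell^q(v)$ is the space of real sequences $f$ with $\|f\|_{\ell^q(v)}=\big(\sum_{k\ge1}v(k)|f(k)|^q\big)^{1/q}<\infty$. The discrete Hardy–Littlewood maximal operator is $\mathcal{M}f(k)=\sup_{n\ge k}\frac1n\sum_{j=1}^n|f(j)|$, $k\in\mathbb{Z}_+$. For $1<q<\infty$, a weight $w$ belongs to $\mathcal{A}_q$ iff $[w]_{\mathcal{A}_q}:=\sup_{n\ge1}\big(\frac1n\sum_{k=1}^n w(k)\big)\big(\frac1n\sum_{k=1}^n w(k)^{-1/(q-1)}\big)^{q-1}<\infty$. $\|\mathcal{M}\|_{\ell^q(v)}$ denotes the operator norm $\sup\{\|\mathcal{M}f\|_{\ell^q(v)}:\|f\|_{\ell^q(v)}\le1\}$; it is known to be finite when $v\in\mathcal{A}_q$ (and $w\in\mathcal{A}_p$ implies $w^{1-p'}\in\mathcal{A}_{p'}$). *)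

theory Defs
  imports "HOL-Analysis.Analysis"
begin

text \<open>Sequences on Z+ are modelled as functions nat => real; index 0 is ignored.
  Norms and sums are taken in ennreal so that divergent sums are +infinity.\<close>

definition enn_rpow :: "ennreal \<Rightarrow> real \<Rightarrow> ennreal" where
  "enn_rpow x r = (if x = top then top else ennreal (enn2real x powr r))"

definition wnorm :: "real \<Rightarrow> (nat \<Rightarrow> real) \<Rightarrow> (nat \<Rightarrow> ennreal) \<Rightarrow> ennreal" where
  "wnorm q v F = enn_rpow (\<Sum>k. ennreal (v (Suc k)) * enn_rpow (F (Suc k)) q) (1 / q)"

definition is_weight :: "(nat \<Rightarrow> real) \<Rightarrow> bool" where
  "is_weight w \<longleftrightarrow> (\<forall>k\<ge>1. w k > 0)"

definition Aq_char :: "real \<Rightarrow> (nat \<Rightarrow> real) \<Rightarrow> ennreal" where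
  "Aq_char q w = (SUP n\<in>{1::nat..}. ennreal
      ((1 / real n * (\<Sum>k=1..n. w k)) *
       (1 / real n * (\<Sum>k=1..n. w k powr (- 1 / (q - 1)))) powr (q - 1)))"

definition in_Aq :: "real \<Rightarrow> (nat \<Rightarrow> real) \<Rightarrow> bool" where
  "in_Aq q w \<longleftrightarrow> is_weight w \<and> Aq_char q w < top"

text \<open>[w]_{A_q} as a real number (meaningful when w is in A_q)\<close>
definition Aq_const :: "real \<Rightarrow> (nat \<Rightarrow> real) \<Rightarrow> real" where
  "Aq_const q w = enn2real (Aq_char q w)"

definition maxop :: "(nat \<Rightarrow> real) \<Rightarrow> nat \<Rightarrow> ennreal" where
  "maxop f k = (SUP n\<in>{max k 1..}. ennreal ((\<Sum>j=1..n. \<bar>f j\<bar>) / real n))"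

definition maxop_norm :: "real \<Rightarrow> (nat \<Rightarrow> real) \<Rightarrow> ennreal" where
  "maxop_norm q v = (SUP f\<in>{f. wnorm q v (\<lambda>k. ennreal \<bar>f k\<bar>) \<le> 1}. wnorm q v (maxop f))"

end

theory Submission
  imports Defs
begin

lemma holder_theta:
  fixes a b :: "'a \<Rightarrow> real"
  assumes fin: "finite S" and th: "0 < \<theta>" "\<theta> < 1"
    and a: "\<And>i. i \<in> S \<Longrightarrow> a i \<ge> 0" and b: "\<And>i. i \<in> S \<Longrightarrow> b i \<ge> 0"
  shows "(\<Sum>i\<in>S. a i powr \<theta> * b i powr (1 - \<theta>)) \<le> (\<Sum>i\<in>S. a i) powr \<theta> * (\<Sum>i\<in>S. b i) powr (1 - \<theta>)"
proof -
  define A where "A = (\<Sum>i\<in>S. a i)"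
  define B where "B = (\<Sum>i\<in>S. b i)"
  have A0: "A \<ge> 0" "B \<ge> 0" using a b by (auto simp: A_def B_def intro: sum_nonneg)
  show ?thesis
  proof (cases "A = 0 \<or> B = 0")
    case True
    then have "\<forall>i\<in>S. a i = 0 \<or> b i = 0"
      using sum_nonneg_eq_0_iff[OF fin] a b unfolding A_def B_def by metis
    then have "(\<Sum>i\<in>S. a i powr \<theta> * b i powr (1 - \<theta>)) = 0"
      by (intro sum.neutral) auto
    then show ?thesis using A0 by (simp add: A_def[symmetric] B_def[symmetric])
  next
    case False
    then have Ap: "A > 0" "B > 0" using A0 by auto
    have "a i powr \<theta> * b i powr (1 - \<theta>) \<le> A powr \<theta> * B powr (1 - \<theta>) * (\<theta> * (a i / A) + (1 - \<theta>) * (b i / B))"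
      if i: "i \<in> S" for i
    proof (cases "a i = 0 \<or> b i = 0")
      case True
      then show ?thesis using a[OF i] b[OF i] Ap th
        by (auto intro!: mult_nonneg_nonneg add_nonneg_nonneg)
    next
      case False
      then have pos: "a i / A > 0" "b i / B > 0" using a[OF i] b[OF i] Ap by auto
      have "(a i / A) powr \<theta> * (b i / B) powr (1 - \<theta>) \<le> \<theta> * (a i / A) + (1 - \<theta>) * (b i / B)"
        using Youngs_inequality_0[of \<theta> "1-\<theta>", OF _ _ _ pos] th by auto
      moreover have "(a i / A) powr \<theta> * (b i / B) powr (1 - \<theta>) = a i powr \<theta> * b i powr (1 - \<theta>) / (A powr \<theta> * B powr (1 - \<theta>))"
        using a[OF i] b[OF i] Ap by (simp add: powr_divide)
      ultimately show ?thesis using Ap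
        by (simp add: divide_le_eq mult.commute)
    qed
    then have "(\<Sum>i\<in>S. a i powr \<theta> * b i powr (1 - \<theta>)) \<le> (\<Sum>i\<in>S. A powr \<theta> * B powr (1 - \<theta>) * (\<theta> * (a i / A) + (1 - \<theta>) * (b i / B)))"
      by (rule sum_mono)
    also have "\<dots> = A powr \<theta> * B powr (1 - \<theta>) * (\<theta> * (\<Sum>i\<in>S. a i) / A + (1 - \<theta>) * (\<Sum>i\<in>S. b i) / B)"
      by (simp add: sum_distrib_left sum.distrib sum_divide_distrib[symmetric] algebra_simps)
    also have "\<dots> = A powr \<theta> * B powr (1 - \<theta>)"
      using Ap by (simp add: A_def[symmetric] B_def[symmetric])
    finally show ?thesis by (simp add: A_def B_def)
  qed
qed

lemma young_key:
  fixes x y r :: real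
  assumes "x \<ge> 0" "y \<ge> 0" "r > 1"
  shows "r / (r - 1) * y * x powr (r - 1) \<le> x powr r + (1 / (r - 1)) * y powr r"
proof -
  have "x powr (r-1) * y \<le> (x powr (r-1)) powr (r/(r-1)) / (r/(r-1)) + y powr r / r"
    using assms by (intro Youngs_inequality) (auto simp: field_simps)
  also have "(x powr (r-1)) powr (r/(r-1)) = x powr r"
    using assms by (simp add: powr_powr)
  finally have "x powr (r-1) * y \<le> x powr r * ((r - 1)/ r) + y powr r / r" by simp
  then have "r * (x powr (r-1) * y) \<le> (r - 1) * x powr r + y powr r"
    using assms by (simp add: field_simps)
  then have "(r * (x powr (r-1) * y)) / (r - 1) \<le> ((r - 1) * x powr r + y powr r) / (r - 1)"
    using assms by (intro divide_right_mono) auto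
  moreover have "r / (r - 1) * y * x powr (r - 1) = (r * (x powr (r-1) * y)) / (r - 1)" by simp
  moreover have "x powr r + (1 / (r - 1)) * y powr r = ((r - 1) * x powr r + y powr r) / (r - 1)"
    using assms by (simp add: field_simps)
  ultimately show ?thesis by (simp add: mult_ac)
qed

definition WA :: "(nat \<Rightarrow> real) \<Rightarrow> (nat \<Rightarrow> real) \<Rightarrow> nat \<Rightarrow> real" where
  "WA \<mu> x n = (\<Sum>j=1..n. \<mu> j * x j) / (\<Sum>j=1..n. \<mu> j)"

definition WM :: "(nat \<Rightarrow> real) \<Rightarrow> (nat \<Rightarrow> real) \<Rightarrow> nat \<Rightarrow> nat \<Rightarrow> real" where
  "WM \<mu> x N k = Max (WA \<mu> x ` {k..N})"

lemma pw_mult: "a \<ge> 0 \<Longrightarrow> r > 1 \<Longrightarrow> a * a powr (r - 1) = a powr (r::real)"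
proof -
  assume a: "a \<ge> 0" and r: "r > 1"
  show ?thesis
  proof (cases "a = 0")
    case True then show ?thesis using r by simp
  next
    case False
    have "a powr (1 + (r - 1)) = a powr 1 * a powr (r - 1)" by (rule powr_add)
    also have "a powr 1 = a" using a by simp
    finally show ?thesis by simp
  qed
qed

lemma WA_nonneg: "(\<And>j. j \<in> {1..n} \<Longrightarrow> \<mu> j > 0) \<Longrightarrow> (\<And>j. j \<in> {1..n} \<Longrightarrow> x j \<ge> 0) \<Longrightarrow> WA \<mu> x n \<ge> 0"
  unfolding WA_def by (intro divide_nonneg_nonneg sum_nonneg) (auto intro: less_imp_le mult_nonneg_nonneg)

lemma WM_ge: "k \<le> n \<Longrightarrow> n \<le> N \<Longrightarrow> WA \<mu> x n \<le> WM \<mu> x N k"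
  unfolding WM_def by (intro Max_ge) auto

lemma WM_in: "k \<le> N \<Longrightarrow> \<exists>n\<in>{k..N}. WM \<mu> x N k = WA \<mu> x n"
  unfolding WM_def using Max_in[of "WA \<mu> x ` {k..N}"] by fastforce

lemma WM_nonneg:
  assumes "1 \<le> k" "k \<le> N" "\<And>j. j \<in> {1..N} \<Longrightarrow> \<mu> j > 0" "\<And>j. j \<in> {1..N} \<Longrightarrow> x j \<ge> 0"
  shows "WM \<mu> x N k \<ge> 0"
  using WM_ge[of k k N \<mu> x] WA_nonneg[of k \<mu> x] assms by fastforce

lemma WM_step: "k < N \<Longrightarrow> WM \<mu> x N k = max (WA \<mu> x k) (WM \<mu> x N (Suc k))"
proof -
  assume "k < N"
  then have "{k..N} = insert k {Suc k..N}" by auto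
  then show ?thesis unfolding WM_def using \<open>k < N\<close>
    by (simp add: Max_insert)
qed

lemma WM_last: "WM \<mu> x N N = WA \<mu> x N"
  unfolding WM_def by simp

lemma alg_root:
  fixes T X c r :: real
  assumes "T \<ge> 0" "X \<ge> 0" "c \<ge> 0" "r > 1" "T \<le> c * X powr (1/r) * T powr (1 - 1/r)"
  shows "T \<le> c powr r * X"
proof (cases "T = 0")
  case True then show ?thesis using assms by simp
next
  case False
  then have Tp: "T > 0" using assms by simp
  have "T = T powr (1/r) * T powr (1 - 1/r)" using Tp by (simp add: powr_add[symmetric])
  then have "T powr (1/r) * T powr (1 - 1/r) \<le> (c * X powr (1/r)) * T powr (1 - 1/r)" using assms by simp
  then have "T powr (1/r) \<le> c * X powr (1/r)" using Tp by (simp add: mult_le_cancel_right)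
  then have "(T powr (1/r)) powr r \<le> (c * X powr (1/r)) powr r"
    using assms Tp by (intro powr_mono2) auto
  then show ?thesis using assms Tp by (simp add: powr_powr powr_mult)
qed

lemma doob_aux:
  fixes \<mu> x :: "nat \<Rightarrow> real" and r :: real
  assumes r: "r > 1" and mu: "\<And>j. j \<in> {1..N} \<Longrightarrow> \<mu> j > 0" and x: "\<And>j. j \<in> {1..N} \<Longrightarrow> x j \<ge> 0"
    and m: "1 \<le> m" "m \<le> N"
  shows "(\<Sum>k=1..m. \<mu> k * WM \<mu> x N k powr r - r/(r-1) * (\<mu> k * x k * WM \<mu> x N k powr (r-1)))
      \<le> (\<Sum>j=1..m. \<mu> j) * WM \<mu> x N m powr r - r/(r-1) * (\<Sum>j=1..m. \<mu> j * x j) * WM \<mu> x N m powr (r-1)"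
  using m(1) m(2)
proof (induction m rule: nat_induct_at_least)
  case base
  note step = base
  then show ?case by (simp add: algebra_simps)
next
  case (Suc m)
  note step = Suc
  define F where "F = WM \<mu> x N"
  define W where "W = (\<Sum>j=1..m. \<mu> j)"
  define S where "S = (\<Sum>j=1..m. \<mu> j * x j)"
  define A where "A = S / W"
  have Wp: "W > 0" unfolding W_def using mu step by (intro sum_pos) auto
  have S0: "S \<ge> 0" unfolding S_def using step by (intro sum_nonneg mult_nonneg_nonneg) (auto intro!: less_imp_le[OF mu] x)
  have A0: "A \<ge> 0" using Wp S0 by (simp add: A_def)
  have Fs0: "F (Suc m) \<ge> 0" unfolding F_def using step mu x by (intro WM_nonneg) auto
  have mN: "m < N" using step by simp
  have Fm: "F m = max A (F (Suc m))" unfolding F_def WM_step[OF mN] A_def S_def W_def WA_def ..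
  have key: "W * F m powr r - r/(r-1) * S * F m powr (r-1) \<le> W * F (Suc m) powr r - r/(r-1) * S * F (Suc m) powr (r-1)"
  proof (cases "F (Suc m) \<ge> A")
    case True then show ?thesis using Fm by simp
  next
    case False
    then have FA: "F m = A" using Fm by simp
    have SA: "S = W * A" using Wp by (simp add: A_def)
    have y: "r / (r - 1) * A * F (Suc m) powr (r - 1) \<le> F (Suc m) powr r + (1 / (r - 1)) * A powr r"
      using young_key[OF Fs0 A0 r] .
    have "W * (r / (r - 1) * A * F (Suc m) powr (r - 1)) \<le> W * (F (Suc m) powr r + (1 / (r - 1)) * A powr r)"
      using y Wp by (intro mult_left_mono) auto
    moreover have "W * A powr r - r/(r-1) * S * A powr (r-1) = - W * A powr r / (r - 1)"
    proof -
      have "r/(r-1) * S * A powr (r-1) = r/(r-1) * W * (A * A powr (r-1))" unfolding SA by (simp add: mult_ac)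
      also have "\<dots> = r/(r-1) * W * A powr r" using pw_mult[OF A0 r] by simp
      finally have e: "r/(r-1) * S * A powr (r-1) = r/(r-1) * W * A powr r" .
      show ?thesis unfolding e using r by (simp add: field_simps)
    qed
    ultimately have a: "W * (r / (r - 1) * A * F (Suc m) powr (r - 1)) \<le> W * (F (Suc m) powr r + (1 / (r - 1)) * A powr r)"
      and b: "W * A powr r - r/(r-1) * S * A powr (r-1) = - W * A powr r / (r - 1)" by blast+
    have a': "r/(r-1) * (W * A) * F (Suc m) powr (r-1) \<le> W * F (Suc m) powr r + W * A powr r / (r-1)"
      using a by (simp add: algebra_simps)
    show ?thesis unfolding FA using a' b unfolding SA by linarith
  qed
  have IH: "(\<Sum>k=1..m. \<mu> k * F k powr r - r/(r-1) * (\<mu> k * x k * F k powr (r-1))) \<le> W * F m powr r - r/(r-1) * S * F m powr (r-1)"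
    using Suc.IH Suc.prems unfolding F_def W_def S_def by simp
  have "(\<Sum>k=1..Suc m. \<mu> k * F k powr r - r/(r-1) * (\<mu> k * x k * F k powr (r-1)))
       = (\<Sum>k=1..m. \<mu> k * F k powr r - r/(r-1) * (\<mu> k * x k * F k powr (r-1))) + (\<mu> (Suc m) * F (Suc m) powr r - r/(r-1) * (\<mu> (Suc m) * x (Suc m) * F (Suc m) powr (r-1)))"
    using step by simp
  also have "\<dots> \<le> W * F (Suc m) powr r - r/(r-1) * S * F (Suc m) powr (r-1) + (\<mu> (Suc m) * F (Suc m) powr r - r/(r-1) * (\<mu> (Suc m) * x (Suc m) * F (Suc m) powr (r-1)))"
    using IH key by simp
  also have "\<dots> = (\<Sum>j=1..Suc m. \<mu> j) * F (Suc m) powr r - r/(r-1) * (\<Sum>j=1..Suc m. \<mu> j * x j) * F (Suc m) powr (r-1)"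
    using step by (simp add: W_def S_def algebra_simps)
  finally show ?case unfolding F_def .
qed

lemma doob:
  fixes \<mu> x :: "nat \<Rightarrow> real" and r :: real
  assumes r: "r > 1" and mu: "\<And>j. j \<in> {1..N} \<Longrightarrow> \<mu> j > 0" and x: "\<And>j. j \<in> {1..N} \<Longrightarrow> x j \<ge> 0"
  shows "(\<Sum>k=1..N. \<mu> k * WM \<mu> x N k powr r) \<le> (r/(r-1)) powr r * (\<Sum>k=1..N. \<mu> k * x k powr r)"
proof (cases "N = 0")
  case True then show ?thesis by simp
next
  case False
  define F where "F = WM \<mu> x N"
  have F0: "\<And>k. k \<in> {1..N} \<Longrightarrow> F k \<ge> 0" unfolding F_def using mu x by (intro WM_nonneg) auto
  define W where "W = (\<Sum>j=1..N. \<mu> j)"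
  define S where "S = (\<Sum>j=1..N. \<mu> j * x j)"
  have Wp: "W > 0" unfolding W_def using mu False by (intro sum_pos) auto
  have FN: "F N = S / W" unfolding F_def WM_last WA_def S_def W_def ..
  have FN0: "F N \<ge> 0" using F0 False by simp
  have WF: "W * F N = S" using FN Wp by simp
  have eqS: "W * F N powr r = S * F N powr (r - 1)"
    using pw_mult[OF FN0 r] WF by (metis mult.assoc)
  have S0: "S \<ge> 0" unfolding S_def by (intro sum_nonneg mult_nonneg_nonneg) (auto intro!: less_imp_le[OF mu] x)
  have last: "W * F N powr r - r/(r-1) * S * F N powr (r-1) \<le> 0"
  proof -
    have P0: "0 \<le> S * F N powr (r - 1)" using S0 by simp
    have "W * F N powr r - r/(r-1) * S * F N powr (r-1) = (1 - r/(r-1)) * (S * F N powr (r - 1))"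
      unfolding eqS by (simp add: algebra_simps)
    moreover have "1 - r/(r-1) \<le> 0" using r by simp
    ultimately show ?thesis using P0 by (simp add: mult_nonpos_nonneg)
  qed
  have "(\<Sum>k=1..N. \<mu> k * F k powr r - r/(r-1) * (\<mu> k * x k * F k powr (r-1))) \<le> 0"
  proof -
    have "(\<Sum>k=1..N. \<mu> k * F k powr r - r/(r-1) * (\<mu> k * x k * F k powr (r-1))) \<le> W * F N powr r - r/(r-1) * S * F N powr (r-1)"
      unfolding F_def W_def S_def by (rule doob_aux[where \<mu>=\<mu> and x=x and r=r and N=N and m=N]) (use r mu x False in auto)
    then show ?thesis using last by linarith
  qed
  then have T1: "(\<Sum>k=1..N. \<mu> k * F k powr r) \<le> r/(r-1) * (\<Sum>k=1..N. \<mu> k * x k * F k powr (r-1))"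
    by (simp add: sum_subtractf sum_distrib_left)
  have "(\<Sum>k=1..N. \<mu> k * x k * F k powr (r-1)) \<le> (\<Sum>k=1..N. \<mu> k * x k powr r) powr (1/r) * (\<Sum>k=1..N. \<mu> k * F k powr r) powr (1 - 1/r)"
  proof -
  have "(\<Sum>k=1..N. \<mu> k * x k * F k powr (r-1)) = (\<Sum>k=1..N. (\<mu> k * x k powr r) powr (1/r) * (\<mu> k * F k powr r) powr (1 - 1/r))"
  proof (rule sum.cong)
    fix k assume k: "k \<in> {1..N}"
    have m0: "\<mu> k > 0" using mu k by auto
    have "(\<mu> k * x k powr r) powr (1/r) * (\<mu> k * F k powr r) powr (1 - 1/r)
        = (\<mu> k powr (1/r) * \<mu> k powr (1 - 1/r)) * ((x k powr r) powr (1/r) * (F k powr r) powr (1 - 1/r))"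
      using m0 x[OF k] F0[OF k] by (simp add: powr_mult)
    also have "\<mu> k powr (1/r) * \<mu> k powr (1 - 1/r) = \<mu> k" using m0 by (simp add: powr_add[symmetric])
    also have "(x k powr r) powr (1/r) = x k" using x[OF k] r by (simp add: powr_powr)
    also have "(F k powr r) powr (1 - 1/r) = F k powr (r - 1)"
    proof -
      have "r * (1 - 1/r) = r - 1" using r by (simp add: field_simps)
      then show ?thesis by (simp add: powr_powr)
    qed
    finally show "\<mu> k * x k * F k powr (r-1) = (\<mu> k * x k powr r) powr (1/r) * (\<mu> k * F k powr r) powr (1 - 1/r)" by simp
  qed simp
  also have "\<dots> \<le> (\<Sum>k=1..N. \<mu> k * x k powr r) powr (1/r) * (\<Sum>k=1..N. \<mu> k * F k powr r) powr (1 - 1/r)"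
    by (rule holder_theta) (use r in \<open>auto intro!: mult_nonneg_nonneg less_imp_le[OF mu] x F0\<close>)
  finally show ?thesis .
  qed
  then have "(\<Sum>k=1..N. \<mu> k * F k powr r) \<le> r/(r-1) * (\<Sum>k=1..N. \<mu> k * x k powr r) powr (1/r) * (\<Sum>k=1..N. \<mu> k * F k powr r) powr (1 - 1/r)"
    using T1 r mult_left_mono[of _ _ "r/(r-1)"] by (smt (verit) divide_nonneg_nonneg mult.assoc)
  then show ?thesis unfolding F_def
    by (intro alg_root) (use r in \<open>auto intro!: sum_nonneg mult_nonneg_nonneg less_imp_le[OF mu] x F0[unfolded F_def]\<close>)
qed

lemma lerner_point:
  fixes \<sigma> u f :: "nat \<Rightarrow> real" and q A :: real
  assumes q: "q > 1" and sp: "\<And>j. j \<in> {1..N} \<Longrightarrow> \<sigma> j > 0" and up: "\<And>j. j \<in> {1..N} \<Longrightarrow> u j > 0"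
    and f: "\<And>j. j \<in> {1..N} \<Longrightarrow> f j \<ge> 0"
    and Acond: "\<And>n. n \<in> {1..N} \<Longrightarrow> ((\<Sum>j=1..n. \<sigma> j) / n) * ((\<Sum>j=1..n. u j) / n) powr (q - 1) \<le> A"
    and kn: "1 \<le> k" "k \<le> n" "n \<le> N"
  shows "WA (\<lambda>_. 1) f n powr (q - 1) \<le> A * WM \<sigma> (\<lambda>j. WM u (\<lambda>i. f i / u i) N j powr (q - 1) / \<sigma> j) N k"
proof -
  define g where "g = (\<lambda>i. f i / u i)"
  define G where "G = (\<lambda>j. WM u g N j powr (q - 1) / \<sigma> j)"
  define S where "S = (\<Sum>j=1..n. \<sigma> j)"
  define U where "U = (\<Sum>j=1..n. u j)"
  define a where "a = WA u g n"
  have n1: "n \<ge> 1" using kn by simp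
  have Sp: "S > 0" unfolding S_def using sp kn by (intro sum_pos) auto
  have Up: "U > 0" unfolding U_def using up kn by (intro sum_pos) auto
  have g0: "\<And>j. j \<in> {1..N} \<Longrightarrow> g j \<ge> 0" unfolding g_def using f up by (simp add: less_imp_le)
  have a0: "a \<ge> 0" unfolding a_def by (rule WA_nonneg) (use up g0 kn in auto)
  have sumf: "(\<Sum>j=1..n. f j) = U * a"
  proof -
    have "(\<Sum>j=1..n. u j * g j) = (\<Sum>j=1..n. f j)"
    proof (intro sum.cong refl)
      fix j assume "j \<in> {1..n}"
      then have "u j > 0" using up kn by auto
      then show "u j * g j = f j" by (simp add: g_def)
    qed
    then show ?thesis unfolding a_def WA_def U_def using Up U_def by simp
  qed
  have avg: "WA (\<lambda>_. 1) f n = (U / n) * a"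
    unfolding WA_def using sumf by simp
  have WAG: "WA \<sigma> G n \<ge> n * a powr (q - 1) / S"
  proof -
    have "(\<Sum>j=1..n. \<sigma> j * G j) = (\<Sum>j=1..n. WM u g N j powr (q - 1))"
    proof (intro sum.cong refl)
      fix j assume "j \<in> {1..n}"
      then have "\<sigma> j > 0" using sp kn by auto
      then show "\<sigma> j * G j = WM u g N j powr (q - 1)" by (simp add: G_def)
    qed
    also have "\<dots> \<ge> (\<Sum>j=1..n. a powr (q - 1))"
    proof (rule sum_mono)
      fix j assume j: "j \<in> {1..n}"
      have "a \<le> WM u g N j" unfolding a_def using j kn by (intro WM_ge) auto
      then show "a powr (q - 1) \<le> WM u g N j powr (q - 1)" using a0 q by (intro powr_mono2) auto
    qed
    finally have "(\<Sum>j=1..n. \<sigma> j * G j) \<ge> n * a powr (q - 1)" by simp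
    then show ?thesis unfolding WA_def S_def[symmetric] using Sp by (simp add: divide_right_mono)
  qed
  have "WA \<sigma> G n \<le> WM \<sigma> G N k" using kn by (intro WM_ge) auto
  then have WsG: "WM \<sigma> G N k \<ge> n * a powr (q - 1) / S" using WAG by simp
  have Ac: "(S / n) * (U / n) powr (q - 1) \<le> A" unfolding S_def U_def using Acond kn by auto
  have "WA (\<lambda>_. 1) f n powr (q - 1) = (U / n) powr (q - 1) * a powr (q - 1)"
    unfolding avg using Up a0 by (subst powr_mult) auto
  also have "\<dots> = ((S / n) * (U / n) powr (q - 1)) * (n * a powr (q - 1) / S)"
    using Sp n1 by (simp add: field_simps)
  also have "\<dots> \<le> A * (n * a powr (q - 1) / S)"
    using Ac Sp by (intro mult_right_mono) auto
  also have "\<dots> \<le> A * WM \<sigma> G N k"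
  proof -
    have "A \<ge> 0" using Ac Sp Up n1 by (smt (verit) divide_nonneg_nonneg of_nat_0_le_iff powr_ge_zero zero_le_mult_iff)
    then show ?thesis using WsG by (intro mult_left_mono) auto
  qed
  finally show ?thesis unfolding G_def g_def .
qed


lemma lerner:
  fixes \<sigma> u f :: "nat \<Rightarrow> real" and q A :: real
  assumes q: "q > 1" and sp: "\<And>j. j \<in> {1..N} \<Longrightarrow> \<sigma> j > 0" and up: "\<And>j. j \<in> {1..N} \<Longrightarrow> u j > 0"
    and f: "\<And>j. j \<in> {1..N} \<Longrightarrow> f j \<ge> 0"
    and Acond: "\<And>n. n \<in> {1..N} \<Longrightarrow> ((\<Sum>j=1..n. \<sigma> j) / n) * ((\<Sum>j=1..n. u j) / n) powr (q - 1) \<le> A"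
    and rel: "\<And>j. j \<in> {1..N} \<Longrightarrow> \<sigma> j = u j powr (1 - q)"
  shows "(\<Sum>k=1..N. \<sigma> k * WM (\<lambda>_. 1) f N k powr q)
     \<le> A powr (q/(q-1)) * q powr (q/(q-1)) * (q/(q-1)) powr q * (\<Sum>k=1..N. \<sigma> k * f k powr q)"
proof (cases "N = 0")
  case True then show ?thesis by simp
next
  case False
  define q' where "q' = q/(q-1)"
  have q'1: "q' > 1" using q by (simp add: q'_def)
  have q'q: "q'/(q'-1) = q" using q by (simp add: q'_def field_simps)
  define g where "g = (\<lambda>i. f i / u i)"
  define Wu where "Wu = WM u g N"
  define G where "G = (\<lambda>j. Wu j powr (q - 1) / \<sigma> j)"
  define Ws where "Ws = WM \<sigma> G N"
  have g0: "\<And>j. j \<in> {1..N} \<Longrightarrow> g j \<ge> 0" unfolding g_def using f up by (simp add: less_imp_le)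
  have Wu0: "\<And>j. j \<in> {1..N} \<Longrightarrow> Wu j \<ge> 0" unfolding Wu_def using up g0 by (intro WM_nonneg) auto
  have G0: "\<And>j. j \<in> {1..N} \<Longrightarrow> G j \<ge> 0" unfolding G_def using sp by (simp add: less_imp_le)
  have Ws0: "\<And>j. j \<in> {1..N} \<Longrightarrow> Ws j \<ge> 0" unfolding Ws_def using sp G0 by (intro WM_nonneg) auto
  have A0: "A \<ge> 0"
  proof -
    have "0 \<le> ((\<Sum>j=1..1. \<sigma> j) / 1) * ((\<Sum>j=1..1. u j) / 1) powr (q - 1)"
      using sp up False by (simp add: less_imp_le)
    also have "\<dots> \<le> A" using Acond[of 1] False by simp
    finally show ?thesis .
  qed
  have pt: "\<sigma> k * WM (\<lambda>_. 1) f N k powr q \<le> A powr q' * (\<sigma> k * Ws k powr q')" if k: "k \<in> {1..N}" for k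
  proof -
    obtain n where n: "n \<in> {k..N}" "WM (\<lambda>_. 1) f N k = WA (\<lambda>_. 1) f n" using WM_in[of k N "\<lambda>_. 1" f] k by auto
    have wa0: "WA (\<lambda>_. 1) f n \<ge> 0" by (rule WA_nonneg) (use f n k in auto)
    have lp: "WA (\<lambda>_. 1) f n powr (q - 1) \<le> A * Ws k"
      unfolding Ws_def G_def Wu_def g_def
      by (rule lerner_point[OF q sp up f Acond]) (use n k in auto)
    have "WA (\<lambda>_. 1) f n powr q = (WA (\<lambda>_. 1) f n powr (q - 1)) powr q'"
      using q by (simp add: powr_powr q'_def)
    also have "\<dots> \<le> (A * Ws k) powr q'" using lp q'1 by (intro powr_mono2) auto
    also have "\<dots> = A powr q' * Ws k powr q'" using A0 Ws0[OF k] by (simp add: powr_mult)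
    finally have "WM (\<lambda>_. 1) f N k powr q \<le> A powr q' * Ws k powr q'" using n by simp
    then show ?thesis using sp[OF k] by (simp add: mult.left_commute)
  qed
  have "(\<Sum>k=1..N. \<sigma> k * WM (\<lambda>_. 1) f N k powr q) \<le> (\<Sum>k=1..N. A powr q' * (\<sigma> k * Ws k powr q'))"
    by (intro sum_mono pt)
  also have "\<dots> = A powr q' * (\<Sum>k=1..N. \<sigma> k * Ws k powr q')" by (simp add: sum_distrib_left)
  also have "(\<Sum>k=1..N. \<sigma> k * Ws k powr q') \<le> q powr q' * (\<Sum>k=1..N. \<sigma> k * G k powr q')"
    unfolding Ws_def using doob[OF q'1 sp G0] q'q by simp
  also have "(\<Sum>k=1..N. \<sigma> k * G k powr q') = (\<Sum>k=1..N. u k * Wu k powr q)"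
  proof (intro sum.cong refl)
    fix k assume k: "k \<in> {1..N}"
    have s: "\<sigma> k > 0" and uk: "u k > 0" using sp up k by auto
    have "\<sigma> k * G k powr q' = \<sigma> k * ((Wu k powr (q - 1)) powr q' / \<sigma> k powr q')"
      unfolding G_def using s Wu0[OF k] by (simp add: powr_divide)
    also have "(Wu k powr (q - 1)) powr q' = Wu k powr q" using q by (simp add: powr_powr q'_def)
    also have "\<sigma> k * (Wu k powr q / \<sigma> k powr q') = \<sigma> k powr (1 - q') * Wu k powr q"
      using s by (simp add: powr_diff field_simps)
    also have "\<sigma> k powr (1 - q') = u k"
    proof -
      have "(1 - q) * (1 - q') = 1" using q by (simp add: q'_def field_simps)
      then show ?thesis using rel[OF k] uk by (simp add: powr_powr)
    qed
    finally show "\<sigma> k * G k powr q' = u k * Wu k powr q" .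
  qed
  also have "(\<Sum>k=1..N. u k * Wu k powr q) \<le> (q/(q-1)) powr q * (\<Sum>k=1..N. u k * g k powr q)"
    unfolding Wu_def by (rule doob[OF q up g0])
  also have "(\<Sum>k=1..N. u k * g k powr q) = (\<Sum>k=1..N. \<sigma> k * f k powr q)"
  proof (intro sum.cong refl)
    fix k assume k: "k \<in> {1..N}"
    have uk: "u k > 0" using up k by auto
    have "u k * g k powr q = u k * (f k powr q / u k powr q)" unfolding g_def using uk f[OF k] by (simp add: powr_divide)
    also have "\<dots> = u k powr (1 - q) * f k powr q" using uk by (simp add: powr_diff field_simps)
    finally show "u k * g k powr q = \<sigma> k * f k powr q" using rel[OF k] by simp
  qed
  finally show ?thesis
    using A0 q by (simp add: q'_def mult_left_mono mult.assoc)
qed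

lemma sum_Suc_shift: "(\<Sum>k<n. f (Suc k)) = (\<Sum>k=1..n. f k)"
  by (induction n) (auto simp: atLeastAtMostSuc_conv add.commute)

lemma enn_rpow_ennreal: "y \<ge> 0 \<Longrightarrow> enn_rpow (ennreal y) r = ennreal (y powr r)"
  unfolding enn_rpow_def by simp

lemma enn_rpow_top[simp]: "enn_rpow top r = top"
  unfolding enn_rpow_def by simp

lemma enn_rpow_mono:
  assumes "a \<le> b" "r \<ge> 0"
  shows "enn_rpow a r \<le> enn_rpow b r"
proof (cases "b = top")
  case True then show ?thesis by simp
next
  case False
  then have "a \<noteq> top" using assms top.extremum_unique by auto
  have "enn2real a \<le> enn2real b" using enn2real_mono[of a b] assms False by (simp add: top.not_eq_extremum)
  then show ?thesis using False assms \<open>a \<noteq> top\<close> unfolding enn_rpow_def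
    by (auto intro!: ennreal_leI powr_mono2)
qed

lemma enn_rpow_SUP_le:
  fixes a :: "'i \<Rightarrow> real"
  assumes "\<And>i. i \<in> I \<Longrightarrow> a i \<ge> 0" "q > 0"
  shows "enn_rpow (SUP i\<in>I. ennreal (a i)) q \<le> (SUP i\<in>I. ennreal (a i powr q))"
proof (cases "(SUP i\<in>I. ennreal (a i powr q)) = top")
  case True then show ?thesis unfolding True by simp
next
  case False
  then obtain B where B: "(SUP i\<in>I. ennreal (a i powr q)) = ennreal B" "B \<ge> 0"
    using ennreal_cases[of "(SUP i\<in>I. ennreal (a i powr q))"] by auto
  have "ennreal (a i) \<le> ennreal (B powr (1/q))" if i: "i \<in> I" for i
  proof -
    have "ennreal (a i powr q) \<le> ennreal B" using B(1) i by (metis SUP_upper)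
    then have "a i powr q \<le> B" using B(2) by (simp add: ennreal_le_iff)
    then have "(a i powr q) powr (1/q) \<le> B powr (1/q)" using assms(2) by (intro powr_mono2) auto
    then have "a i \<le> B powr (1/q)" using assms i by (simp add: powr_powr)
    then show ?thesis by (rule ennreal_leI)
  qed
  then have "(SUP i\<in>I. ennreal (a i)) \<le> ennreal (B powr (1/q))" by (rule SUP_least)
  then have "enn_rpow (SUP i\<in>I. ennreal (a i)) q \<le> enn_rpow (ennreal (B powr (1/q))) q"
    using assms by (intro enn_rpow_mono) auto
  also have "\<dots> = ennreal B" using B(2) assms(2) by (simp add: enn_rpow_ennreal powr_powr)
  finally show ?thesis using B(1) by simp
qed

lemma maxop_as_SUP: "k \<ge> 1 \<Longrightarrow> maxop x k = (SUP n\<in>{k..}. ennreal (WA (\<lambda>_. 1) (\<lambda>j. \<bar>x j\<bar>) n))"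
  unfolding maxop_def WA_def by (simp add: max_def)

lemma maxop_sum_bound:
  fixes \<sigma> u x :: "nat \<Rightarrow> real" and q A Xr :: real
  assumes q: "q > 1" and sp: "\<And>j. j \<ge> 1 \<Longrightarrow> \<sigma> j > 0" and up: "\<And>j. j \<ge> 1 \<Longrightarrow> u j > 0"
    and Acond: "\<And>n. n \<ge> 1 \<Longrightarrow> ((\<Sum>j=1..n. \<sigma> j) / n) * ((\<Sum>j=1..n. u j) / n) powr (q - 1) \<le> A"
    and rel: "\<And>j. j \<ge> 1 \<Longrightarrow> \<sigma> j = u j powr (1 - q)"
    and X: "\<And>N. (\<Sum>k=1..N. \<sigma> k * \<bar>x k\<bar> powr q) \<le> Xr"
  shows "(\<Sum>k. ennreal (\<sigma> (Suc k)) * enn_rpow (maxop x (Suc k)) q)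
     \<le> ennreal (A powr (q/(q-1)) * q powr (q/(q-1)) * (q/(q-1)) powr q * Xr)"
proof -
  define C where "C = A powr (q/(q-1)) * q powr (q/(q-1)) * (q/(q-1)) powr q"
  define ax where "ax = (\<lambda>j. \<bar>x j\<bar>)"
  have C0: "C \<ge> 0" unfolding C_def by simp
  have L: "\<And>N. (\<Sum>k=1..N. \<sigma> k * WM (\<lambda>_. 1) ax N k powr q) \<le> C * Xr"
  proof -
    fix N
    have "(\<Sum>k=1..N. \<sigma> k * WM (\<lambda>_. 1) ax N k powr q) \<le> C * (\<Sum>k=1..N. \<sigma> k * ax k powr q)"
      unfolding C_def by (rule lerner[OF q]) (use sp up Acond rel in \<open>auto simp: ax_def\<close>)
    also have "\<dots> \<le> C * Xr" using X C0 by (intro mult_left_mono) (auto simp: ax_def)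
    finally show "(\<Sum>k=1..N. \<sigma> k * WM (\<lambda>_. 1) ax N k powr q) \<le> C * Xr" .
  qed
  have ptw: "ennreal (\<sigma> k) * enn_rpow (maxop x k) q \<le> (SUP N. ennreal (\<sigma> k * WM (\<lambda>_. 1) ax (N + K) k powr q))"
    if k: "1 \<le> k" "k \<le> K" for k K
  proof -
    have "enn_rpow (maxop x k) q \<le> (SUP n\<in>{k..}. ennreal (WA (\<lambda>_. 1) ax n powr q))"
      unfolding maxop_as_SUP[OF k(1)] ax_def
      by (rule enn_rpow_SUP_le) (use q in \<open>auto intro!: WA_nonneg\<close>)
    also have "\<dots> \<le> (SUP N. ennreal (WM (\<lambda>_. 1) ax (N + K) k powr q))"
    proof (rule SUP_least)
      fix n assume n: "n \<in> {k..}"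
      have "WA (\<lambda>_. 1) ax n \<le> WM (\<lambda>_. 1) ax (n + K) k" using n by (intro WM_ge) auto
      moreover have "WA (\<lambda>_. 1) ax n \<ge> 0" by (rule WA_nonneg) (auto simp: ax_def)
      ultimately have "ennreal (WA (\<lambda>_. 1) ax n powr q) \<le> ennreal (WM (\<lambda>_. 1) ax (n + K) k powr q)"
        using q by (intro ennreal_leI powr_mono2) auto
      also have "\<dots> \<le> (SUP N. ennreal (WM (\<lambda>_. 1) ax (N + K) k powr q))" by (rule SUP_upper) simp
      finally show "ennreal (WA (\<lambda>_. 1) ax n powr q) \<le> (SUP N. ennreal (WM (\<lambda>_. 1) ax (N + K) k powr q))" .
    qed
    finally have "ennreal (\<sigma> k) * enn_rpow (maxop x k) q \<le> ennreal (\<sigma> k) * (SUP N. ennreal (WM (\<lambda>_. 1) ax (N + K) k powr q))"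
      by (rule mult_left_mono) simp
    also have "\<dots> = (SUP N. ennreal (\<sigma> k * WM (\<lambda>_. 1) ax (N + K) k powr q))"
      using sp[OF k(1)] by (simp add: SUP_mult_left_ennreal ennreal_mult)
    finally show ?thesis .
  qed
  have inc: "incseq (\<lambda>N. ennreal (\<sigma> k * WM (\<lambda>_. 1) ax (N + K) k powr q))" if k: "1 \<le> k" "k \<le> K" for k K
  proof (rule incseq_SucI)
    fix N
    have "WM (\<lambda>_. 1) ax (N + K) k \<le> WM (\<lambda>_. 1) ax (Suc N + K) k"
    proof -
      obtain n where n: "n \<in> {k..N+K}" "WM (\<lambda>_. 1) ax (N + K) k = WA (\<lambda>_. 1) ax n"
        using WM_in[of k "N+K" "\<lambda>_. 1" ax] k by auto
      then show ?thesis using WM_ge[of k n "Suc N + K" "\<lambda>_. 1" ax] by auto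
    qed
    moreover have "WM (\<lambda>_. 1) ax (N + K) k \<ge> 0" using k by (intro WM_nonneg) (auto simp: ax_def)
    ultimately show "ennreal (\<sigma> k * WM (\<lambda>_. 1) ax (N + K) k powr q) \<le> ennreal (\<sigma> k * WM (\<lambda>_. 1) ax (Suc N + K) k powr q)"
      using sp[OF k(1)] q by (intro ennreal_leI mult_left_mono powr_mono2) auto
  qed
  have part: "(\<Sum>k<K. ennreal (\<sigma> (Suc k)) * enn_rpow (maxop x (Suc k)) q) \<le> ennreal (C * Xr)" for K
  proof -
    have "(\<Sum>k<K. ennreal (\<sigma> (Suc k)) * enn_rpow (maxop x (Suc k)) q) = (\<Sum>k=1..K. ennreal (\<sigma> k) * enn_rpow (maxop x k) q)"
      by (rule sum_Suc_shift)
    also have "\<dots> \<le> (\<Sum>k=1..K. SUP N. ennreal (\<sigma> k * WM (\<lambda>_. 1) ax (N + K) k powr q))"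
      by (intro sum_mono ptw) auto
    also have "\<dots> = (SUP N. \<Sum>k=1..K. ennreal (\<sigma> k * WM (\<lambda>_. 1) ax (N + K) k powr q))"
      by (rule ennreal_SUP_sum[symmetric]) (use inc in auto)
    also have "\<dots> \<le> ennreal (C * Xr)"
    proof (rule SUP_least)
      fix N
      have nn: "\<And>k. k \<in> {1..N+K} \<Longrightarrow> 0 \<le> \<sigma> k * WM (\<lambda>_. 1) ax (N + K) k powr q"
        using sp by (auto intro!: mult_nonneg_nonneg less_imp_le[OF sp])
      have "(\<Sum>k=1..K. ennreal (\<sigma> k * WM (\<lambda>_. 1) ax (N + K) k powr q)) \<le> (\<Sum>k=1..N+K. ennreal (\<sigma> k * WM (\<lambda>_. 1) ax (N + K) k powr q))"
        by (intro sum_mono2) auto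
      also have "\<dots> = ennreal (\<Sum>k=1..N+K. \<sigma> k * WM (\<lambda>_. 1) ax (N + K) k powr q)"
        using nn by (rule sum_ennreal)
      also have "\<dots> \<le> ennreal (C * Xr)" using L by (intro ennreal_leI)
      finally show "(\<Sum>k=1..K. ennreal (\<sigma> k * WM (\<lambda>_. 1) ax (N + K) k powr q)) \<le> ennreal (C * Xr)" .
    qed
    finally show ?thesis .
  qed
  show ?thesis unfolding C_def[symmetric]
    by (rule suminf_le_const) (use part in auto)
qed

lemma partial_le:
  assumes "(\<Sum>k. ennreal (a (Suc k))) \<le> ennreal s" "\<And>k. k \<ge> 1 \<Longrightarrow> a k \<ge> 0" "s \<ge> 0"
  shows "(\<Sum>k=1..N. a k) \<le> s"
proof -
  have "ennreal (\<Sum>k=1..N. a k) = (\<Sum>k=1..N. ennreal (a k))"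
    using assms(2) by (subst sum_ennreal) auto
  also have "\<dots> = (\<Sum>k<N. ennreal (a (Suc k)))" by (rule sum_Suc_shift[symmetric])
  also have "\<dots> \<le> (\<Sum>k. ennreal (a (Suc k)))" by (rule sum_le_suminf) auto
  also have "\<dots> \<le> ennreal s" by (rule assms(1))
  finally have "ennreal (\<Sum>k=1..N. a k) \<le> ennreal s" .
  moreover have "(\<Sum>k=1..N. a k) \<ge> 0" using assms(2) by (intro sum_nonneg) auto
  ultimately show ?thesis using assms(3) by (simp add: ennreal_le_iff)
qed

lemma wsum_ennreal:
  assumes "\<And>k. k \<ge> 1 \<Longrightarrow> v k \<ge> 0" "\<And>k. k \<ge> 1 \<Longrightarrow> z k \<ge> 0"
  shows "(\<Sum>k. ennreal (v (Suc k)) * enn_rpow (ennreal (z (Suc k))) q) = (\<Sum>k. ennreal (v (Suc k) * z (Suc k) powr q))"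
  by (rule suminf_cong) (use assms in \<open>simp add: enn_rpow_ennreal ennreal_mult\<close>)

lemma maxop_zero: "(\<And>j. j \<ge> 1 \<Longrightarrow> x j = 0) \<Longrightarrow> maxop x k = 0"
  unfolding maxop_def by (simp add: sum.neutral)

lemma maxop_scale:
  assumes "c > 0"
  shows "maxop (\<lambda>j. x j / c) k = maxop x k / ennreal c"
proof -
  have "maxop (\<lambda>j. x j / c) k = (SUP n\<in>{max k 1..}. ennreal ((\<Sum>j=1..n. \<bar>x j\<bar>) / real n) / ennreal c)"
    unfolding maxop_def
  proof (intro SUP_cong refl)
    fix n
    have "(\<Sum>j=1..n. \<bar>x j / c\<bar>) = (\<Sum>j=1..n. \<bar>x j\<bar>) / c" using assms by (simp add: sum_divide_distrib)
    then show "ennreal ((\<Sum>j=1..n. \<bar>x j / c\<bar>) / real n) = ennreal ((\<Sum>j=1..n. \<bar>x j\<bar>) / real n) / ennreal c"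
      using assms by (simp add: divide_ennreal sum_nonneg)
  qed
  also have "\<dots> = maxop x k / ennreal c" unfolding maxop_def by (simp add: SUP_divide_ennreal)
  finally show ?thesis .
qed

lemma term_le_suminf: "(f::nat \<Rightarrow> ennreal) i \<le> suminf f"
  using sum_le_suminf[of f "{i}"] by auto

lemma maxop_fin:
  assumes "(\<Sum>k. ennreal (v (Suc k)) * enn_rpow (maxop x (Suc k)) q) \<noteq> top" "v k > 0" "k \<ge> 1"
  shows "maxop x k \<noteq> top"
proof
  assume t: "maxop x k = top"
  obtain i where i: "k = Suc i" using assms(3) by (cases k) auto
  have "ennreal (v (Suc i)) * enn_rpow (maxop x (Suc i)) q \<le> (\<Sum>k. ennreal (v (Suc k)) * enn_rpow (maxop x (Suc k)) q)"
    by (rule term_le_suminf[where f="\<lambda>k. ennreal (v (Suc k)) * enn_rpow (maxop x (Suc k)) q"])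
  moreover have "ennreal (v (Suc i)) * enn_rpow (maxop x (Suc i)) q = top"
    using t i assms(2) by (simp add: ennreal_mult_top)
  ultimately show False using assms(1) by (simp add: top_unique)
qed

lemma enn_rpow_le1:
  assumes "enn_rpow S (1/q) \<le> 1" "q > 0"
  obtains s where "S = ennreal s" "0 \<le> s" "s \<le> 1"
proof -
  have "S \<noteq> top" using assms(1) by (auto simp: top_unique)
  then obtain s where s: "S = ennreal s" "0 \<le> s" using ennreal_cases[of S] by auto
  then have "ennreal (s powr (1/q)) \<le> 1" using assms by (simp add: enn_rpow_ennreal)
  then have "s powr (1/q) \<le> 1" by (simp add: ennreal_le_1)
  then have "(s powr (1/q)) powr q \<le> 1 powr q" using assms by (intro powr_mono2) auto
  then have "s \<le> 1" using s assms by (simp add: powr_powr)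
  then show ?thesis using s that by blast
qed

lemma maxop_norm_fin:
  fixes \<sigma> u :: "nat \<Rightarrow> real" and q A :: real
  assumes q: "q > 1" and sp: "\<And>j. j \<ge> 1 \<Longrightarrow> \<sigma> j > 0" and up: "\<And>j. j \<ge> 1 \<Longrightarrow> u j > 0"
    and Acond: "\<And>n. n \<ge> 1 \<Longrightarrow> ((\<Sum>j=1..n. \<sigma> j) / n) * ((\<Sum>j=1..n. u j) / n) powr (q - 1) \<le> A"
    and rel: "\<And>j. j \<ge> 1 \<Longrightarrow> \<sigma> j = u j powr (1 - q)"
  shows "maxop_norm q \<sigma> \<le> ennreal ((A powr (q/(q-1)) * q powr (q/(q-1)) * (q/(q-1)) powr q) powr (1/q))"
  unfolding maxop_norm_def
proof (rule SUP_least)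
  define C where "C = A powr (q/(q-1)) * q powr (q/(q-1)) * (q/(q-1)) powr q"
  have C0: "C \<ge> 0" unfolding C_def by simp
  fix f assume "f \<in> {f. wnorm q \<sigma> (\<lambda>k. ennreal \<bar>f k\<bar>) \<le> 1}"
  then have w0: "wnorm q \<sigma> (\<lambda>k. ennreal \<bar>f k\<bar>) \<le> 1" by simp
  have e: "(\<Sum>k. ennreal (\<sigma> (Suc k)) * enn_rpow (ennreal \<bar>f (Suc k)\<bar>) q) = (\<Sum>k. ennreal (\<sigma> (Suc k) * \<bar>f (Suc k)\<bar> powr q))"
    by (rule wsum_ennreal[where z="\<lambda>k. \<bar>f k\<bar>"]) (auto intro: less_imp_le[OF sp])
  have w1: "enn_rpow (\<Sum>k. ennreal (\<sigma> (Suc k) * \<bar>f (Suc k)\<bar> powr q)) (1/q) \<le> 1"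
    using w0 unfolding wnorm_def e .
  obtain s where s: "(\<Sum>k. ennreal (\<sigma> (Suc k) * \<bar>f (Suc k)\<bar> powr q)) = ennreal s" "0 \<le> s" "s \<le> 1"
    using enn_rpow_le1[OF w1] q by auto
  have X: "(\<Sum>k=1..N. \<sigma> k * \<bar>f k\<bar> powr q) \<le> 1" for N
  proof -
    have "(\<Sum>k=1..N. \<sigma> k * \<bar>f k\<bar> powr q) \<le> s"
      by (rule partial_le[where a="\<lambda>k. \<sigma> k * \<bar>f k\<bar> powr q"]) (use s in \<open>auto intro!: mult_nonneg_nonneg less_imp_le[OF sp]\<close>)
    then show ?thesis using s by simp
  qed
  have T: "(\<Sum>k. ennreal (\<sigma> (Suc k)) * enn_rpow (maxop f (Suc k)) q) \<le> ennreal (C * 1)"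
    unfolding C_def by (rule maxop_sum_bound[OF q sp up Acond rel X])
  have "wnorm q \<sigma> (maxop f) \<le> enn_rpow (ennreal C) (1/q)"
    unfolding wnorm_def using T q by (intro enn_rpow_mono) auto
  also have "\<dots> = ennreal (C powr (1/q))" using C0 by (simp add: enn_rpow_ennreal)
  finally show "wnorm q \<sigma> (maxop f) \<le> ennreal (C powr (1/q))" .
qed

lemma norm_bound:
  fixes \<sigma> x :: "nat \<Rightarrow> real" and q s :: real
  assumes q: "q > 1" and sp: "\<And>j. j \<ge> 1 \<Longrightarrow> \<sigma> j > 0" and x0: "\<And>j. j \<ge> 1 \<Longrightarrow> x j \<ge> 0"
    and Kfin: "maxop_norm q \<sigma> \<noteq> top"
    and Sx: "(\<Sum>k. ennreal (\<sigma> (Suc k) * x (Suc k) powr q)) = ennreal s" "s \<ge> 0"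
    and Tfin: "(\<Sum>k. ennreal (\<sigma> (Suc k)) * enn_rpow (maxop x (Suc k)) q) \<noteq> top"
  shows "(\<Sum>k. ennreal (\<sigma> (Suc k)) * enn_rpow (maxop x (Suc k)) q) \<le> ennreal (enn2real (maxop_norm q \<sigma>) powr q * s)"
proof (cases "s = 0")
  case True
  have "x j = 0" if j: "j \<ge> 1" for j
  proof -
    obtain i where i: "j = Suc i" using j by (cases j) auto
    have "ennreal (\<sigma> (Suc i) * x (Suc i) powr q) \<le> ennreal s"
      using term_le_suminf[where f="\<lambda>k. ennreal (\<sigma> (Suc k) * x (Suc k) powr q)" and i=i] Sx by simp
    then have "\<sigma> j * x j powr q \<le> 0" using True i by (simp add: ennreal_eq_0_iff)
    moreover have "\<sigma> j > 0" using sp j by simp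
    ultimately have "x j powr q \<le> 0" by (simp add: mult_le_0_iff)
    then have "x j powr q = 0" using powr_ge_zero[of "x j" q] by linarith
    then show ?thesis by simp
  qed
  then have "\<And>k. maxop x k = 0" by (intro maxop_zero) auto
  then show ?thesis by (simp add: enn_rpow_def)
next
  case False
  then have sp0: "s > 0" using Sx by simp
  define c where "c = s powr (1/q)"
  have cp: "c > 0" using sp0 by (simp add: c_def)
  have cq: "c powr q = s" using sp0 q by (simp add: c_def powr_powr)
  define y where "y = (\<lambda>j. x j / c)"
  have Sy: "(\<Sum>k. ennreal (\<sigma> (Suc k)) * enn_rpow (ennreal \<bar>y (Suc k)\<bar>) q) = 1"
  proof -
    have "(\<Sum>k. ennreal (\<sigma> (Suc k)) * enn_rpow (ennreal \<bar>y (Suc k)\<bar>) q) = (\<Sum>k. ennreal (\<sigma> (Suc k) * x (Suc k) powr q) / ennreal s)"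
    proof (rule suminf_cong)
      fix k
      have "\<bar>y (Suc k)\<bar> = x (Suc k) / c" using x0[of "Suc k"] cp by (simp add: y_def)
      then have "enn_rpow (ennreal \<bar>y (Suc k)\<bar>) q = ennreal (x (Suc k) powr q / s)"
        using x0[of "Suc k"] cp by (simp add: enn_rpow_ennreal powr_divide cq)
      then show "ennreal (\<sigma> (Suc k)) * enn_rpow (ennreal \<bar>y (Suc k)\<bar>) q = ennreal (\<sigma> (Suc k) * x (Suc k) powr q) / ennreal s"
        using sp[of "Suc k"] sp0 x0[of "Suc k"] by (simp add: ennreal_mult ennreal_times_divide divide_ennreal[symmetric])
    qed
    also have "\<dots> = ennreal s / ennreal s" using Sx by simp
    also have "\<dots> = 1" using sp0 by (simp add: divide_ennreal)
    finally show ?thesis .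
  qed
  have wy: "wnorm q \<sigma> (\<lambda>k. ennreal \<bar>y k\<bar>) \<le> 1"
    unfolding wnorm_def Sy by (simp add: enn_rpow_def)
  have My: "wnorm q \<sigma> (maxop y) \<le> maxop_norm q \<sigma>"
    unfolding maxop_norm_def by (rule SUP_upper) (use wy in simp)
  define m where "m = (\<lambda>k. enn2real (maxop x k))"
  have mx: "maxop x (Suc k) = ennreal (m (Suc k))" for k
    using maxop_fin[OF Tfin, of "Suc k"] sp[of "Suc k"] by (simp add: m_def ennreal_enn2real_if)
  have m0: "m k \<ge> 0" for k by (simp add: m_def)
  define Tx where "Tx = (\<Sum>k. ennreal (\<sigma> (Suc k)) * enn_rpow (maxop x (Suc k)) q)"
  obtain t where t: "Tx = ennreal t" "t \<ge> 0" using Tfin ennreal_cases[of Tx] unfolding Tx_def by auto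
  have Tx': "Tx = (\<Sum>k. ennreal (\<sigma> (Suc k) * m (Suc k) powr q))"
    unfolding Tx_def mx by (rule suminf_cong) (use sp m0 in \<open>simp add: enn_rpow_ennreal ennreal_mult less_imp_le\<close>)
  have "(\<Sum>k. ennreal (\<sigma> (Suc k)) * enn_rpow (maxop y (Suc k)) q) = (\<Sum>k. ennreal (\<sigma> (Suc k) * m (Suc k) powr q) / ennreal s)"
  proof (rule suminf_cong)
    fix k
    have "maxop y (Suc k) = ennreal (m (Suc k) / c)"
      unfolding y_def maxop_scale[OF cp] mx using cp m0 by (simp add: divide_ennreal)
    then have "enn_rpow (maxop y (Suc k)) q = ennreal (m (Suc k) powr q / s)"
      using m0[of "Suc k"] cp by (simp add: enn_rpow_ennreal powr_divide cq)
    then show "ennreal (\<sigma> (Suc k)) * enn_rpow (maxop y (Suc k)) q = ennreal (\<sigma> (Suc k) * m (Suc k) powr q) / ennreal s"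
      using sp[of "Suc k"] sp0 m0[of "Suc k"] by (simp add: ennreal_mult ennreal_times_divide divide_ennreal[symmetric])
  qed
  also have "\<dots> = Tx / ennreal s" unfolding Tx' by simp
  also have "\<dots> = ennreal (t / s)" using t sp0 by (simp add: divide_ennreal)
  finally have Ty: "(\<Sum>k. ennreal (\<sigma> (Suc k)) * enn_rpow (maxop y (Suc k)) q) = ennreal (t / s)" .
  define K where "K = enn2real (maxop_norm q \<sigma>)"
  have Kn: "maxop_norm q \<sigma> = ennreal K" using Kfin by (simp add: K_def ennreal_enn2real_if)
  have "ennreal ((t / s) powr (1/q)) \<le> ennreal K"
    using My unfolding wnorm_def Ty Kn using t sp0 by (simp add: enn_rpow_ennreal)
  then have "(t / s) powr (1/q) \<le> K" using K_def by (simp add: ennreal_le_iff)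
  then have "((t / s) powr (1/q)) powr q \<le> K powr q" using q t sp0 by (intro powr_mono2) auto
  then have "t / s \<le> K powr q" using q t sp0 by (simp add: powr_powr)
  then have "t \<le> K powr q * s" using sp0 by (simp add: divide_le_eq)
  then show ?thesis using t unfolding Tx_def K_def by (simp add: ennreal_leI)
qed

definition Mr :: "(nat \<Rightarrow> real) \<Rightarrow> nat \<Rightarrow> real" where
  "Mr x k = enn2real (maxop x k)"

definition SN :: "real \<Rightarrow> (nat \<Rightarrow> real) \<Rightarrow> (nat \<Rightarrow> real) \<Rightarrow> ennreal" where
  "SN q v x = (\<Sum>k. ennreal (v (Suc k) * x (Suc k) powr q))"

locale rdf =
  fixes q :: real and \<sigma> :: "nat \<Rightarrow> real"
  assumes q: "q > 1" and sp: "\<And>j. j \<ge> 1 \<Longrightarrow> \<sigma> j > 0"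
    and Kfin: "maxop_norm q \<sigma> \<noteq> top"
    and MBfin: "\<And>x s. (\<And>j. j \<ge> 1 \<Longrightarrow> x j \<ge> 0) \<Longrightarrow> SN q \<sigma> x = ennreal s
        \<Longrightarrow> (\<Sum>k. ennreal (\<sigma> (Suc k)) * enn_rpow (maxop x (Suc k)) q) \<noteq> top"
begin

definition K where "K = enn2real (maxop_norm q \<sigma>)"

lemma K0: "K \<ge> 0" by (simp add: K_def)

lemma Mr_nonneg: "Mr x k \<ge> 0" by (simp add: Mr_def)

lemma NB:
  assumes x0: "\<And>j. j \<ge> 1 \<Longrightarrow> x j \<ge> 0" and Sx: "SN q \<sigma> x = ennreal s" "s \<ge> 0"
  shows "\<And>k. k \<ge> 1 \<Longrightarrow> maxop x k = ennreal (Mr x k)"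
    and "SN q \<sigma> (Mr x) \<le> ennreal (K powr q * s)"
proof -
  have Tf: "(\<Sum>k. ennreal (\<sigma> (Suc k)) * enn_rpow (maxop x (Suc k)) q) \<noteq> top"
    by (rule MBfin[OF x0 Sx(1)])
  show mx: "maxop x k = ennreal (Mr x k)" if "k \<ge> 1" for k
    using maxop_fin[OF Tf, of k] sp[of k] that by (simp add: Mr_def ennreal_enn2real_if)
  have "SN q \<sigma> (Mr x) = (\<Sum>k. ennreal (\<sigma> (Suc k)) * enn_rpow (maxop x (Suc k)) q)"
    unfolding SN_def
  proof (rule suminf_cong)
    fix k
    show "ennreal (\<sigma> (Suc k) * Mr x (Suc k) powr q) = ennreal (\<sigma> (Suc k)) * enn_rpow (maxop x (Suc k)) q"
    proof -
      have e: "enn_rpow (maxop x (Suc k)) q = ennreal (Mr x (Suc k) powr q)"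
        by (subst mx) (auto simp: enn_rpow_ennreal Mr_nonneg)
      show ?thesis unfolding e using sp[of "Suc k"] by (simp add: ennreal_mult)
    qed
  qed
  also have "\<dots> \<le> ennreal (K powr q * s)"
    unfolding K_def by (rule norm_bound[OF q sp x0 Kfin Sx[unfolded SN_def] Tf])
  finally show "SN q \<sigma> (Mr x) \<le> ennreal (K powr q * s)" .
qed


lemma SN_le_fin:
  assumes "SN q \<sigma> x \<le> ennreal b" "b \<ge> 0"
  obtains s where "SN q \<sigma> x = ennreal s" "0 \<le> s" "s \<le> b"
proof -
  have "SN q \<sigma> x \<noteq> top" using assms by (auto simp: top_unique)
  then obtain s where s: "SN q \<sigma> x = ennreal s" "0 \<le> s" using ennreal_cases[of "SN q \<sigma> x"] by auto
  then have "s \<le> b" using assms by (simp add: ennreal_le_iff)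
  then show ?thesis using that s by blast
qed

definition T :: "(nat \<Rightarrow> real) \<Rightarrow> nat \<Rightarrow> nat \<Rightarrow> real" where
  "T h i = (Mr ^^ i) h"

lemma T_0[simp]: "T h 0 = h" by (simp add: T_def)
lemma T_Suc: "T h (Suc i) = Mr (T h i)" by (simp add: T_def)

lemma T_nonneg: "(\<And>j. j \<ge> 1 \<Longrightarrow> h j \<ge> 0) \<Longrightarrow> j \<ge> 1 \<Longrightarrow> T h i j \<ge> 0"
  by (cases i) (auto simp: T_Suc Mr_nonneg)

lemma powr_pow: "(a::real) \<ge> 0 \<Longrightarrow> (a ^ i) powr r = (a powr r) ^ i"
  by (induction i) (auto simp: powr_mult)

lemma T_norm:
  assumes h0: "\<And>j. j \<ge> 1 \<Longrightarrow> h j \<ge> 0" and Sh: "SN q \<sigma> h = ennreal s" "s \<ge> 0"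
  shows "\<exists>si. SN q \<sigma> (T h i) = ennreal si \<and> 0 \<le> si \<and> si \<le> (K powr q) ^ i * s"
proof (induction i)
  case 0 then show ?case using Sh by auto
next
  case (Suc i)
  then obtain si where si: "SN q \<sigma> (T h i) = ennreal si" "0 \<le> si" "si \<le> (K powr q) ^ i * s" by auto
  have "SN q \<sigma> (T h (Suc i)) \<le> ennreal (K powr q * si)"
    unfolding T_Suc by (rule NB(2)[OF _ si(1) si(2)]) (use h0 T_nonneg in auto)
  then obtain s' where s': "SN q \<sigma> (T h (Suc i)) = ennreal s'" "0 \<le> s'" "s' \<le> K powr q * si"
    using SN_le_fin[of "T h (Suc i)" "K powr q * si"] si(2) by auto
  have "K powr q * si \<le> K powr q * ((K powr q) ^ i * s)" using si(3) by (intro mult_left_mono) auto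
  then show ?case using s' by (intro exI[of _ s']) auto
qed

lemma term_le_SN:
  assumes "SN q \<sigma> x = ennreal s" "s \<ge> 0" "j \<ge> 1" "x j \<ge> 0"
  shows "\<sigma> j * x j powr q \<le> s"
proof -
  obtain i where i: "j = Suc i" using assms(3) by (cases j) auto
  have "ennreal (\<sigma> j * x j powr q) \<le> ennreal s"
    using term_le_suminf[where f="\<lambda>k. ennreal (\<sigma> (Suc k) * x (Suc k) powr q)" and i=i] assms(1) i
    by (simp add: SN_def)
  then show ?thesis using assms(2) by (simp add: ennreal_le_iff)
qed

lemma T_pt:
  assumes h0: "\<And>j. j \<ge> 1 \<Longrightarrow> h j \<ge> 0" and Sh: "SN q \<sigma> h = ennreal s" "s \<ge> 0" and j: "j \<ge> 1"
  shows "T h i j \<le> K ^ i * (s / \<sigma> j) powr (1/q)"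
proof -
  obtain si where si: "SN q \<sigma> (T h i) = ennreal si" "0 \<le> si" "si \<le> (K powr q) ^ i * s"
    using T_norm[OF h0 Sh] by auto
  have Tj: "T h i j \<ge> 0" using T_nonneg h0 j by auto
  have sj: "\<sigma> j > 0" using sp j by auto
  have "\<sigma> j * T h i j powr q \<le> (K powr q) ^ i * s" using term_le_SN[OF si(1) si(2) j Tj] si(3) by simp
  then have "T h i j powr q \<le> (K ^ i) powr q * (s / \<sigma> j)"
    using sj K0 by (simp add: powr_pow field_simps)
  then have "(T h i j powr q) powr (1/q) \<le> ((K ^ i) powr q * (s / \<sigma> j)) powr (1/q)"
    using q by (intro powr_mono2) auto
  also have "\<dots> = K ^ i * (s / \<sigma> j) powr (1/q)"
  proof -
    have "((K ^ i) powr q * (s / \<sigma> j)) powr (1/q) = ((K ^ i) powr q) powr (1/q) * (s / \<sigma> j) powr (1/q)"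
      using powr_mult[of "(K ^ i) powr q" "s / \<sigma> j" "1/q"] sj Sh(2) by (simp add: less_imp_le)
    also have "((K ^ i) powr q) powr (1/q) = K ^ i" using K0 q by (simp add: powr_powr)
    finally show ?thesis .
  qed
  finally show ?thesis using Tj q by (simp add: powr_powr)
qed

end

lemma holder_w:
  fixes \<mu> a b :: "nat \<Rightarrow> real"
  assumes fin: "finite S" and q: "q > 1" and mu: "\<And>j. j \<in> S \<Longrightarrow> \<mu> j > 0"
    and a: "\<And>j. j \<in> S \<Longrightarrow> a j \<ge> 0" and b: "\<And>j. j \<in> S \<Longrightarrow> b j \<ge> 0"
  shows "(\<Sum>j\<in>S. \<mu> j * a j * b j powr (q - 1)) \<le> (\<Sum>j\<in>S. \<mu> j * a j powr q) powr (1/q) * (\<Sum>j\<in>S. \<mu> j * b j powr q) powr (1 - 1/q)"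
proof -
  have "(\<Sum>j\<in>S. \<mu> j * a j * b j powr (q - 1)) = (\<Sum>j\<in>S. (\<mu> j * a j powr q) powr (1/q) * (\<mu> j * b j powr q) powr (1 - 1/q))"
  proof (rule sum.cong)
    fix k assume k: "k \<in> S"
    have m0: "\<mu> k > 0" using mu k by auto
    have "(\<mu> k * a k powr q) powr (1/q) * (\<mu> k * b k powr q) powr (1 - 1/q)
        = (\<mu> k powr (1/q) * \<mu> k powr (1 - 1/q)) * ((a k powr q) powr (1/q) * (b k powr q) powr (1 - 1/q))"
      using m0 a[OF k] b[OF k] by (simp add: powr_mult)
    also have "\<mu> k powr (1/q) * \<mu> k powr (1 - 1/q) = \<mu> k" using m0 by (simp add: powr_add[symmetric])
    also have "(a k powr q) powr (1/q) = a k" using a[OF k] q by (simp add: powr_powr)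
    also have "(b k powr q) powr (1 - 1/q) = b k powr (q - 1)"
    proof -
      have "q * (1 - 1/q) = q - 1" using q by (simp add: field_simps)
      then show ?thesis by (simp add: powr_powr)
    qed
    finally show "\<mu> k * a k * b k powr (q - 1) = (\<mu> k * a k powr q) powr (1/q) * (\<mu> k * b k powr q) powr (1 - 1/q)" by simp
  qed simp
  also have "\<dots> \<le> (\<Sum>j\<in>S. \<mu> j * a j powr q) powr (1/q) * (\<Sum>j\<in>S. \<mu> j * b j powr q) powr (1 - 1/q)"
    by (rule holder_theta[OF fin]) (use q in \<open>auto intro!: mult_nonneg_nonneg less_imp_le[OF mu] a b\<close>)
  finally show ?thesis .
qed

context rdf
begin

definition H :: "(nat \<Rightarrow> real) \<Rightarrow> nat \<Rightarrow> real" where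
  "H h j = (\<Sum>i. T h i j / (2 * K) ^ i)"

context
  fixes h :: "nat \<Rightarrow> real" and s :: real
  assumes h0: "\<And>j. j \<ge> 1 \<Longrightarrow> h j \<ge> 0" and Sh: "SN q \<sigma> h = ennreal s" and s0: "s \<ge> 0"
    and Kp: "K > 0"
begin

lemma H_summable: "j \<ge> 1 \<Longrightarrow> summable (\<lambda>i. T h i j / (2 * K) ^ i)"
proof -
  assume j: "j \<ge> 1"
  define C where "C = (s / \<sigma> j) powr (1/q)"
  show ?thesis
  proof (rule summable_comparison_test')
    show "summable (\<lambda>i. C * (1/2) ^ i)" by (intro summable_mult summable_geometric) simp
    fix i :: nat
    have "norm (T h i j / (2 * K) ^ i) = T h i j / (2 * K) ^ i" using T_nonneg[OF h0 j] Kp by simp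
    also have "\<dots> \<le> K ^ i * C / (2 * K) ^ i"
      using T_pt[OF h0 Sh s0 j, of i] Kp by (intro divide_right_mono) (auto simp: C_def)
    also have "\<dots> = C * (1/2) ^ i" using Kp by (simp add: power_mult_distrib power_divide field_simps)
    finally show "norm (T h i j / (2 * K) ^ i) \<le> C * (1/2) ^ i" .
  qed
qed

lemma H_nonneg: "j \<ge> 1 \<Longrightarrow> H h j \<ge> 0"
  unfolding H_def by (rule suminf_nonneg[OF H_summable]) (use T_nonneg[OF h0] Kp in auto)

lemma H_ge: "j \<ge> 1 \<Longrightarrow> h j \<le> H h j"
proof -
  assume j: "j \<ge> 1"
  have "(\<Sum>i\<in>{0}. T h i j / (2 * K) ^ i) \<le> (\<Sum>i. T h i j / (2 * K) ^ i)"
    by (rule sum_le_suminf[OF H_summable[OF j]]) (use T_nonneg[OF h0 j] Kp in auto)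
  then show ?thesis by (simp add: H_def)
qed

lemma avg_T_le:
  assumes j: "1 \<le> j" "j \<le> n"
  shows "(\<Sum>m=1..n. T h i m) / n \<le> T h (Suc i) j"
proof -
  obtain si where si: "SN q \<sigma> (T h i) = ennreal si" "0 \<le> si"
    using T_norm[OF h0 Sh s0, of i] by auto
  have Ti0: "\<And>m. m \<ge> 1 \<Longrightarrow> T h i m \<ge> 0" using T_nonneg[OF h0] by auto
  have mx: "maxop (T h i) j = ennreal (Mr (T h i) j)" using NB(1)[OF Ti0 si] j by auto
  have "(\<Sum>m=1..n. \<bar>T h i m\<bar>) = (\<Sum>m=1..n. T h i m)" using Ti0 by (intro sum.cong) auto
  then have "ennreal ((\<Sum>m=1..n. T h i m) / n) \<le> maxop (T h i) j"
    unfolding maxop_def using j by (intro SUP_upper2[of n]) auto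
  then have "ennreal ((\<Sum>m=1..n. T h i m) / n) \<le> ennreal (Mr (T h i) j)" using mx by simp
  then show ?thesis unfolding T_Suc using Mr_nonneg by (simp add: ennreal_le_iff)
qed

lemma H_A1:
  assumes j: "1 \<le> j" "j \<le> n"
  shows "(\<Sum>m=1..n. H h m) / n \<le> 2 * K * H h j"
proof -
  have sm: "\<And>m. m \<in> {1..n} \<Longrightarrow> summable (\<lambda>i. T h i m / (2 * K) ^ i)" using H_summable by auto
  have "(\<Sum>m=1..n. H h m) = (\<Sum>i. \<Sum>m=1..n. T h i m / (2 * K) ^ i)"
    unfolding H_def by (rule suminf_sum[symmetric]) (use sm in auto)
  also have "\<dots> = (\<Sum>i. (\<Sum>m=1..n. T h i m) / (2 * K) ^ i)" by (simp add: sum_divide_distrib)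
  finally have e1: "(\<Sum>m=1..n. H h m) / n = (\<Sum>i. (\<Sum>m=1..n. T h i m) / (2 * K) ^ i) / n" by simp
  have sL: "summable (\<lambda>i. (\<Sum>m=1..n. T h i m) / (2 * K) ^ i)"
    using summable_sum[of "{1..n}" "\<lambda>m i. T h i m / (2 * K) ^ i", OF sm] by (simp add: sum_divide_distrib)
  have sR: "summable (\<lambda>i. T h (Suc i) j / (2 * K) ^ Suc i)"
    using H_summable[OF j(1)] by (subst summable_Suc_iff)
  have "(\<Sum>i. (\<Sum>m=1..n. T h i m) / (2 * K) ^ i) / n = (\<Sum>i. (\<Sum>m=1..n. T h i m) / n / (2 * K) ^ i)"
    using suminf_divide[OF sL, of n] by (simp add: field_simps)
  also have "\<dots> \<le> (\<Sum>i. 2 * K * (T h (Suc i) j / (2 * K) ^ Suc i))"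
  proof (rule suminf_le)
    fix i
    have "(\<Sum>m=1..n. T h i m) / n / (2 * K) ^ i \<le> T h (Suc i) j / (2 * K) ^ i"
      using avg_T_le[OF j, of i] Kp by (intro divide_right_mono) auto
    also have "\<dots> = 2 * K * (T h (Suc i) j / (2 * K) ^ Suc i)" using Kp by simp
    finally show "(\<Sum>m=1..n. T h i m) / n / (2 * K) ^ i \<le> 2 * K * (T h (Suc i) j / (2 * K) ^ Suc i)" .
  next
    show "summable (\<lambda>i. (\<Sum>m=1..n. T h i m) / n / (2 * K) ^ i)"
      using summable_divide[OF sL, of n] by (simp add: field_simps)
    show "summable (\<lambda>i. 2 * K * (T h (Suc i) j / (2 * K) ^ Suc i))" by (rule summable_mult[OF sR])
  qed
  also have "\<dots> = 2 * K * (H h j - h j)"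
    unfolding suminf_mult[OF sR] H_def suminf_split_head[OF H_summable[OF j(1)]] by simp
  also have "\<dots> \<le> 2 * K * H h j" using h0 j Kp by (intro mult_left_mono) auto
  finally show ?thesis unfolding e1 .
qed

lemma H_norm_part: "(\<Sum>j=1..J. \<sigma> j * H h j powr q) \<le> 2 powr q * s"
proof -
  define P where "P = (\<Sum>j=1..J. \<sigma> j * H h j powr q)"
  have P0: "P \<ge> 0" unfolding P_def using H_nonneg sp by (intro sum_nonneg) (auto intro!: mult_nonneg_nonneg less_imp_le[OF sp])
  have sm: "\<And>j. j \<in> {1..J} \<Longrightarrow> summable (\<lambda>i. T h i j / (2 * K) ^ i)" using H_summable by auto
  have "P = (\<Sum>j=1..J. \<sigma> j * H h j powr (q - 1) * H h j)"
    unfolding P_def using pw_mult[OF H_nonneg q] by (intro sum.cong) (auto simp: mult.commute mult.left_commute)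
  also have "\<dots> = (\<Sum>j=1..J. \<Sum>i. \<sigma> j * H h j powr (q - 1) * (T h i j / (2 * K) ^ i))"
  proof (intro sum.cong refl)
    fix j assume j: "j \<in> {1..J}"
    show "\<sigma> j * H h j powr (q - 1) * H h j = (\<Sum>i. \<sigma> j * H h j powr (q - 1) * (T h i j / (2 * K) ^ i))"
      unfolding suminf_mult[OF sm[OF j]] H_def[of h j, symmetric] ..
  qed
  also have "\<dots> = (\<Sum>i. \<Sum>j=1..J. \<sigma> j * H h j powr (q - 1) * (T h i j / (2 * K) ^ i))"
    by (rule suminf_sum[symmetric], rule summable_mult, rule sm, assumption)
  also have "\<dots> \<le> (\<Sum>i. s powr (1/q) * P powr (1 - 1/q) * (1/2) ^ i)"
  proof (rule suminf_le)
    fix i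
    obtain si where si: "SN q \<sigma> (T h i) = ennreal si" "0 \<le> si" "si \<le> (K powr q) ^ i * s"
      using T_norm[OF h0 Sh s0, of i] by auto
    have Ti0: "\<And>m. m \<ge> 1 \<Longrightarrow> T h i m \<ge> 0" using T_nonneg[OF h0] by auto
    have pTi: "(\<Sum>j=1..J. \<sigma> j * T h i j powr q) \<le> (K powr q) ^ i * s"
    proof -
      have "(\<Sum>j=1..J. \<sigma> j * T h i j powr q) \<le> si"
        by (rule partial_le[where a="\<lambda>k. \<sigma> k * T h i k powr q"]) (use si in \<open>auto intro!: mult_nonneg_nonneg less_imp_le[OF sp] simp: SN_def\<close>)
      then show ?thesis using si by simp
    qed
    have "(\<Sum>j=1..J. \<sigma> j * H h j powr (q - 1) * (T h i j / (2 * K) ^ i)) = (\<Sum>j=1..J. \<sigma> j * T h i j * H h j powr (q - 1)) / (2 * K) ^ i"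
      by (simp add: sum_divide_distrib mult_ac)
    also have "\<dots> \<le> ((\<Sum>j=1..J. \<sigma> j * T h i j powr q) powr (1/q) * P powr (1 - 1/q)) / (2 * K) ^ i"
      unfolding P_def using Kp by (intro divide_right_mono holder_w) (auto intro: sp Ti0 H_nonneg q)
    also have "\<dots> \<le> (((K powr q) ^ i * s) powr (1/q) * P powr (1 - 1/q)) / (2 * K) ^ i"
      using Kp pTi q by (intro divide_right_mono mult_right_mono powr_mono2) (auto intro!: sum_nonneg mult_nonneg_nonneg less_imp_le[OF sp] Ti0)
    also have "((K powr q) ^ i * s) powr (1/q) = K ^ i * s powr (1/q)"
    proof -
      have "((K powr q) ^ i * s) powr (1/q) = ((K powr q) ^ i) powr (1/q) * s powr (1/q)"
        using powr_mult[of "(K powr q) ^ i" s "1/q"] s0 by simp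
      also have "((K powr q) ^ i) powr (1/q) = K ^ i"
        using Kp q by (simp add: powr_pow[symmetric] powr_powr)
      finally show ?thesis .
    qed
    also have "K ^ i * s powr (1/q) * P powr (1 - 1/q) / (2 * K) ^ i = s powr (1/q) * P powr (1 - 1/q) * (1/2) ^ i"
      using Kp by (simp add: power_mult_distrib power_divide field_simps)
    finally show "(\<Sum>j=1..J. \<sigma> j * H h j powr (q - 1) * (T h i j / (2 * K) ^ i)) \<le> s powr (1/q) * P powr (1 - 1/q) * (1/2) ^ i" .
  next
    show "summable (\<lambda>i. \<Sum>j=1..J. \<sigma> j * H h j powr (q - 1) * (T h i j / (2 * K) ^ i))"
      by (rule summable_sum, rule summable_mult, rule sm, assumption)
    show "summable (\<lambda>i. s powr (1/q) * P powr (1 - 1/q) * (1/2::real) ^ i)"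
      by (intro summable_mult summable_geometric) simp
  qed
  also have "\<dots> = 2 * s powr (1/q) * P powr (1 - 1/q)"
    using suminf_mult[OF summable_geometric[of "1/2::real"], of "s powr (1/q) * P powr (1 - 1/q)"]
    by (simp add: suminf_geometric)
  finally have "P \<le> 2 * s powr (1/q) * P powr (1 - 1/q)" .
  then have "P \<le> 2 powr q * s" by (intro alg_root) (use P0 s0 q in auto)
  then show ?thesis by (simp add: P_def)
qed

lemma H_norm: "SN q \<sigma> (H h) \<le> ennreal (2 powr q * s)"
  unfolding SN_def
proof (rule suminf_le_const)
  fix N
  have "(\<Sum>k<N. ennreal (\<sigma> (Suc k) * H h (Suc k) powr q)) = (\<Sum>k=1..N. ennreal (\<sigma> k * H h k powr q))"
    by (rule sum_Suc_shift)
  also have "\<dots> = ennreal (\<Sum>k=1..N. \<sigma> k * H h k powr q)"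
    by (subst sum_ennreal) (auto intro!: mult_nonneg_nonneg less_imp_le[OF sp])
  also have "\<dots> \<le> ennreal (2 powr q * s)" by (intro ennreal_leI H_norm_part)
  finally show "(\<Sum>k<N. ennreal (\<sigma> (Suc k) * H h (Suc k) powr q)) \<le> ennreal (2 powr q * s)" .
qed simp

end
end

lemma w0_term:
  fixes w Hh :: "nat \<Rightarrow> real" and p p0 K W :: real
  assumes p0: "1 < p0" "p0 < p" and wp: "\<And>j. j \<ge> 1 \<Longrightarrow> w j > 0" and Hp: "\<And>j. j \<ge> 1 \<Longrightarrow> Hh j > 0"
    and Kp: "K > 0"
    and A1: "\<And>j n. 1 \<le> j \<Longrightarrow> j \<le> n \<Longrightarrow> (\<Sum>m=1..n. Hh m) / n \<le> 2 * K * Hh j"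
    and Wc: "(1 / real n * (\<Sum>k=1..n. w k)) * (1 / real n * (\<Sum>k=1..n. w k powr (- 1 / (p - 1)))) powr (p - 1) \<le> W"
    and n: "n \<ge> 1"
  shows "(1 / real n * (\<Sum>k=1..n. w k powr ((p0 - 1) / (p - 1)) * Hh k powr ((p - p0) / (p - 1)))) *
         (1 / real n * (\<Sum>k=1..n. (w k powr ((p0 - 1) / (p - 1)) * Hh k powr ((p - p0) / (p - 1))) powr (- 1 / (p0 - 1)))) powr (p0 - 1)
         \<le> (2 * K) powr ((p - p0) / (p - 1)) * W powr ((p0 - 1) / (p - 1))"
proof -
  define a where "a = (p - p0) / (p - 1)"
  define b where "b = (p0 - 1) / (p - 1)"
  have ab: "b = 1 - a" "0 < a" "0 < b" "a < 1" using p0 by (auto simp: a_def b_def field_simps)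
  define SW where "SW = (\<Sum>k=1..n. w k) / n"
  define SS where "SS = (\<Sum>k=1..n. w k powr (- 1 / (p - 1))) / n"
  define SH where "SH = (\<Sum>k=1..n. Hh k) / n"
  have nr: "real n > 0" using n by simp
  have SWp: "SW > 0" unfolding SW_def using wp n by (intro divide_pos_pos sum_pos) auto
  have SSp: "SS > 0"
  proof -
    have "\<forall>k\<in>{1..n}. w k powr (- 1 / (p - 1)) > 0" using wp by (auto intro!: powr_gt_zero[THEN iffD2] less_imp_neq[symmetric])
    then show ?thesis unfolding SS_def using n by (intro divide_pos_pos sum_pos) auto
  qed
  have SHp: "SH > 0" unfolding SH_def using Hp n by (intro divide_pos_pos sum_pos) auto
  define m where "m = SH / (2 * K)"
  have mp: "m > 0" using SHp Kp by (simp add: m_def)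
  have Hm: "Hh j \<ge> m" if "1 \<le> j" "j \<le> n" for j
  proof -
    have "SH \<le> 2 * K * Hh j" using A1[OF that] by (simp add: SH_def)
    then show ?thesis using Kp by (simp add: m_def pos_divide_le_eq mult_ac)
  qed
  have f1: "1 / real n * (\<Sum>k=1..n. w k powr b * Hh k powr a) \<le> SW powr b * SH powr a"
  proof -
    have "(\<Sum>k=1..n. w k powr b * Hh k powr a) \<le> (\<Sum>k=1..n. w k) powr b * (\<Sum>k=1..n. Hh k) powr (1 - b)"
      using holder_theta[of "{1..n}" b w Hh] ab wp Hp by (force simp: less_imp_le)
    also have "(\<Sum>k=1..n. w k) = real n * SW" using nr by (simp add: SW_def)
    also have "(\<Sum>k=1..n. Hh k) = real n * SH" using nr by (simp add: SH_def)
    also have "(real n * SW) powr b * (real n * SH) powr (1 - b) = real n * (SW powr b * SH powr a)"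
    proof -
      have "(real n * SW) powr b * (real n * SH) powr (1 - b) = (real n powr b * real n powr (1 - b)) * (SW powr b * SH powr (1 - b))"
        using nr SWp SHp by (simp add: powr_mult)
      also have "real n powr b * real n powr (1 - b) = real n" using nr by (simp add: powr_add[symmetric])
      finally show ?thesis using ab by simp
    qed
    finally show ?thesis using nr by (simp add: divide_le_eq mult.commute)
  qed
  have f2: "(1 / real n * (\<Sum>k=1..n. (w k powr b * Hh k powr a) powr (- 1 / (p0 - 1)))) powr (p0 - 1)
      \<le> SS powr (p0 - 1) * m powr (- a)"
  proof -
    have "(\<Sum>k=1..n. (w k powr b * Hh k powr a) powr (- 1 / (p0 - 1))) \<le> (\<Sum>k=1..n. w k powr (- 1 / (p - 1)) * m powr (- a / (p0 - 1)))"
    proof (rule sum_mono)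
      fix k assume k: "k \<in> {1..n}"
      have wk: "w k > 0" and hk: "Hh k > 0" using wp Hp k by auto
      have "(w k powr b * Hh k powr a) powr (- 1 / (p0 - 1)) = w k powr (b * (- 1 / (p0 - 1))) * Hh k powr (a * (- 1 / (p0 - 1)))"
        using wk hk by (simp add: powr_mult powr_powr)
      also have "b * (- 1 / (p0 - 1)) = - 1 / (p - 1)" using p0 by (simp add: b_def field_simps)
      also have "Hh k powr (a * (- 1 / (p0 - 1))) \<le> m powr (- a / (p0 - 1))"
      proof -
        have e: "a * (- 1 / (p0 - 1)) = - (a / (p0 - 1))" by simp
        have "m powr (a / (p0 - 1)) \<le> Hh k powr (a / (p0 - 1))" using Hm k mp ab p0 by (intro powr_mono2) auto
        then show ?thesis unfolding e using mp hk by (simp add: powr_minus divide_simps)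
      qed
      then have "w k powr (- 1 / (p - 1)) * Hh k powr (a * (- 1 / (p0 - 1))) \<le> w k powr (- 1 / (p - 1)) * m powr (- a / (p0 - 1))"
        by (intro mult_left_mono) auto
      finally show "(w k powr b * Hh k powr a) powr (- 1 / (p0 - 1)) \<le> w k powr (- 1 / (p - 1)) * m powr (- a / (p0 - 1))" .
    qed
    also have "\<dots> = real n * SS * m powr (- a / (p0 - 1))" using nr by (simp add: SS_def sum_distrib_right)
    finally have "1 / real n * (\<Sum>k=1..n. (w k powr b * Hh k powr a) powr (- 1 / (p0 - 1))) \<le> SS * m powr (- a / (p0 - 1))"
      using nr by (simp add: divide_le_eq mult.commute mult.left_commute)
    then have "(1 / real n * (\<Sum>k=1..n. (w k powr b * Hh k powr a) powr (- 1 / (p0 - 1)))) powr (p0 - 1)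
        \<le> (SS * m powr (- a / (p0 - 1))) powr (p0 - 1)"
      using p0 by (intro powr_mono2) (auto intro!: sum_nonneg divide_nonneg_nonneg)
    also have "\<dots> = SS powr (p0 - 1) * m powr (- a)"
      using SSp mp p0 by (simp add: powr_mult powr_powr)
    finally show ?thesis .
  qed
  have "(1 / real n * (\<Sum>k=1..n. w k powr b * Hh k powr a)) *
        (1 / real n * (\<Sum>k=1..n. (w k powr b * Hh k powr a) powr (- 1 / (p0 - 1)))) powr (p0 - 1)
      \<le> (SW powr b * SH powr a) * (SS powr (p0 - 1) * m powr (- a))"
    by (rule mult_mono[OF f1 f2]) simp_all
  also have "\<dots> = (2 * K) powr a * (SW * SS powr (p - 1)) powr b"
  proof -
    have "SH powr a * m powr (- a) = (2 * K) powr a"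
      using SHp Kp by (simp add: m_def powr_minus powr_divide field_simps)
    moreover have "(SW * SS powr (p - 1)) powr b = SW powr b * SS powr (p0 - 1)"
      using SWp SSp p0 by (simp add: powr_mult powr_powr b_def)
    ultimately show ?thesis by (simp add: mult_ac)
  qed
  also have "\<dots> \<le> (2 * K) powr a * W powr b"
  proof -
    have "SW * SS powr (p - 1) \<le> W" using Wc by (simp add: SW_def SS_def)
    then have "(SW * SS powr (p - 1)) powr b \<le> W powr b" using SWp SSp ab by (intro powr_mono2) auto
    then show ?thesis by (intro mult_left_mono) auto
  qed
  finally show ?thesis by (simp add: a_def b_def)
qed

lemma enn_le_real: "ennreal x \<le> c \<Longrightarrow> c \<noteq> top \<Longrightarrow> x \<le> enn2real c"
proof -
  assume a: "ennreal x \<le> c" "c \<noteq> top"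
  have "enn2real (ennreal x) \<le> enn2real c" using a by (intro enn2real_mono) (auto simp: top.not_eq_extremum)
  moreover have "x \<le> enn2real (ennreal x)" by (cases "x \<ge> 0") (auto simp: ennreal_neg)
  ultimately show ?thesis by linarith
qed

lemma term_le_SN_gen:
  assumes "SN q v x = ennreal s" "s \<ge> 0" "j \<ge> 1"
  shows "v j * x j powr q \<le> s"
proof -
  obtain i where i: "j = Suc i" using assms(3) by (cases j) auto
  have "ennreal (v j * x j powr q) \<le> ennreal s"
    using term_le_suminf[where f="\<lambda>k. ennreal (v (Suc k) * x (Suc k) powr q)" and i=i] assms(1) i
    by (simp add: SN_def)
  then show ?thesis using assms(2) by (simp add: ennreal_le_iff)
qed

lemma wnorm_SN: "(\<And>k. k \<ge> 1 \<Longrightarrow> v k \<ge> 0) \<Longrightarrow> (\<And>k. k \<ge> 1 \<Longrightarrow> x k \<ge> 0) \<Longrightarrow>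
   wnorm q v (\<lambda>k. ennreal (x k)) = enn_rpow (SN q v x) (1/q)"
  unfolding wnorm_def SN_def by (subst wsum_ennreal) auto

theorem theorem3p2:
  fixes p0 p :: real and f g w :: "nat \<Rightarrow> real" and \<phi> :: "real \<Rightarrow> real"
  assumes "1 < p0" "p0 < p"
    and "\<forall>k\<ge>1. f k \<ge> 0" "\<forall>k\<ge>1. g k \<ge> 0"
    and "\<forall>x\<ge>1. \<phi> x > 0" "mono_on {1..} \<phi>"
    and "\<forall>w0. in_Aq p0 w0 \<longrightarrow>
           wnorm p0 w0 (\<lambda>k. ennreal (f k)) \<le> ennreal (\<phi> (Aq_const p0 w0)) * wnorm p0 w0 (\<lambda>k. ennreal (g k))"
    and "in_Aq p w"
    and "wnorm p w (\<lambda>k. ennreal (f k)) < top"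
  shows "wnorm p w (\<lambda>k. ennreal (f k)) \<le>
     ennreal (2 powr ((p - p0) / ((p - 1) * p0)) *
       \<phi> ((2 * enn2real (maxop_norm (p / (p - 1)) (\<lambda>k. w k powr (1 - p / (p - 1)))))
              powr ((p - p0) / (p - 1)) * Aq_const p w powr ((p0 - 1) / (p - 1))))
     * wnorm p w (\<lambda>k. ennreal (g k))"
proof -
  note p0 = assms(1,2)
  have f0: "\<And>k. k \<ge> 1 \<Longrightarrow> f k \<ge> 0" and g0: "\<And>k. k \<ge> 1 \<Longrightarrow> g k \<ge> 0" using assms(3,4) by auto
  have p1: "p > 1" using p0 by simp
  define q where "q = p / (p - 1)"
  define \<sigma> where "\<sigma> = (\<lambda>k. w k powr (1 - p / (p - 1)))"
  define a where "a = (p - p0) / (p - 1)"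
  define b where "b = (p0 - 1) / (p - 1)"
  define W where "W = Aq_const p w"
  have q1: "q > 1" using p1 by (simp add: q_def)
  have wp: "\<And>j. j \<ge> 1 \<Longrightarrow> w j > 0" using assms(8) by (auto simp: in_Aq_def is_weight_def)
  have sp: "\<sigma> j > 0" if j: "j \<ge> 1" for j
  proof -
    have "w j > 0" using wp[OF j] .
    then show ?thesis by (simp add: \<sigma>_def)
  qed
  have expo: "- 1 / (p - 1) = 1 - p / (p - 1)" using p1 by (simp add: field_simps)
  have Wc: "(1 / real n * (\<Sum>k=1..n. w k)) * (1 / real n * (\<Sum>k=1..n. w k powr (- 1 / (p - 1)))) powr (p - 1) \<le> W"
    if n: "n \<ge> 1" for n
  proof -
    have "Aq_char p w \<noteq> top" using assms(8) by (auto simp: in_Aq_def)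
    moreover have "ennreal ((1 / real n * (\<Sum>k=1..n. w k)) * (1 / real n * (\<Sum>k=1..n. w k powr (- 1 / (p - 1)))) powr (p - 1)) \<le> Aq_char p w"
      unfolding Aq_char_def by (rule SUP_upper) (use n in auto)
    ultimately show ?thesis unfolding W_def Aq_const_def by (intro enn_le_real)
  qed
  have W0: "W \<ge> 0" by (simp add: W_def Aq_const_def)
  have Acond: "((\<Sum>j=1..n. \<sigma> j) / n) * ((\<Sum>j=1..n. w j) / n) powr (q - 1) \<le> W powr (q - 1)"
    if n: "n \<ge> 1" for n
  proof -
    define SW where "SW = (\<Sum>k=1..n. w k) / n"
    define SS where "SS = (\<Sum>k=1..n. \<sigma> k) / n"
    have SW0: "SW \<ge> 0" unfolding SW_def by (intro divide_nonneg_nonneg sum_nonneg) (auto intro: less_imp_le[OF wp])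
    have SS0: "SS \<ge> 0" unfolding SS_def by (intro divide_nonneg_nonneg sum_nonneg) (auto intro: less_imp_le[OF sp])
    have "SW * SS powr (p - 1) \<le> W" using Wc[OF n] unfolding SW_def SS_def \<sigma>_def expo by simp
    then have "(SW * SS powr (p - 1)) powr (q - 1) \<le> W powr (q - 1)" using SW0 SS0 q1 by (intro powr_mono2) auto
    moreover have "(SW * SS powr (p - 1)) powr (q - 1) = SS * SW powr (q - 1)"
    proof -
      have "(p - 1) * (q - 1) = 1" using p1 by (simp add: q_def field_simps)
      then show ?thesis using SW0 SS0 by (simp add: powr_mult powr_powr mult.commute)
    qed
    ultimately show ?thesis by (simp add: SW_def SS_def)
  qed
  have rel: "\<And>j. j \<ge> 1 \<Longrightarrow> \<sigma> j = w j powr (1 - q)" by (simp add: \<sigma>_def q_def)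
  define C where "C = (W powr (q - 1)) powr (q/(q-1)) * q powr (q/(q-1)) * (q/(q-1)) powr q"
  have Kfin: "maxop_norm q \<sigma> \<noteq> top"
  proof -
    have "maxop_norm q \<sigma> \<le> ennreal (C powr (1/q))"
      unfolding C_def by (rule maxop_norm_fin[OF q1 sp wp Acond rel])
    then show ?thesis by (auto simp: top_unique)
  qed
  have MBfin: "(\<Sum>k. ennreal (\<sigma> (Suc k)) * enn_rpow (maxop x (Suc k)) q) \<noteq> top"
    if x0: "\<And>j. j \<ge> 1 \<Longrightarrow> x j \<ge> 0" and Sx: "SN q \<sigma> x = ennreal s" for x s
  proof -
    define s' where "s' = max s 0"
    have Sx': "SN q \<sigma> x = ennreal s'" using Sx by (cases "s \<ge> 0") (auto simp: s'_def ennreal_neg)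
    have X: "(\<Sum>k=1..N. \<sigma> k * \<bar>x k\<bar> powr q) \<le> s'" for N
    proof -
      have "(\<Sum>k=1..N. \<sigma> k * \<bar>x k\<bar> powr q) = (\<Sum>k=1..N. \<sigma> k * x k powr q)" using x0 by (intro sum.cong) auto
      also have "\<dots> \<le> s'"
        by (rule partial_le[where a="\<lambda>k. \<sigma> k * x k powr q"]) (use Sx' in \<open>auto intro!: mult_nonneg_nonneg less_imp_le[OF sp] simp: SN_def s'_def\<close>)
      finally show ?thesis .
    qed
    have "(\<Sum>k. ennreal (\<sigma> (Suc k)) * enn_rpow (maxop x (Suc k)) q) \<le> ennreal (C * s')"
      unfolding C_def by (rule maxop_sum_bound[OF q1 sp wp Acond rel X])
    then show ?thesis by (auto simp: top_unique)
  qed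
  interpret R: rdf q \<sigma>
  proof
    show "q > 1" by (rule q1)
    show "\<And>j. j \<ge> 1 \<Longrightarrow> \<sigma> j > 0" by (rule sp)
    show "maxop_norm q \<sigma> \<noteq> top" by (rule Kfin)
    show "\<And>x s. (\<And>j. j \<ge> 1 \<Longrightarrow> x j \<ge> 0) \<Longrightarrow> SN q \<sigma> x = ennreal s \<Longrightarrow> (\<Sum>k. ennreal (\<sigma> (Suc k)) * enn_rpow (maxop x (Suc k)) q) \<noteq> top"
      by (rule MBfin)
  qed
  define X where "X = (2 * R.K) powr a * W powr b"
  define e2 where "e2 = (p - p0) / ((p - 1) * p0)"
  have Xeq: "(2 * enn2real (maxop_norm (p / (p - 1)) (\<lambda>k. w k powr (1 - p / (p - 1)))))
              powr ((p - p0) / (p - 1)) * Aq_const p w powr ((p0 - 1) / (p - 1)) = X"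
    unfolding X_def R.K_def by (simp add: q_def \<sigma>_def a_def b_def W_def)
  have w0': "\<And>k. k \<ge> 1 \<Longrightarrow> w k \<ge> 0" using wp less_imp_le by blast
  have Ff: "wnorm p w (\<lambda>k. ennreal (f k)) = enn_rpow (SN p w f) (1/p)" by (rule wnorm_SN[OF w0' f0])
  have Gg: "wnorm p w (\<lambda>k. ennreal (g k)) = enn_rpow (SN p w g) (1/p)" by (rule wnorm_SN[OF w0' g0])
  have main: "wnorm p w (\<lambda>k. ennreal (f k)) \<le> ennreal (2 powr e2 * \<phi> X) * wnorm p w (\<lambda>k. ennreal (g k))"
  proof (cases "\<forall>k\<ge>1. f k = 0")
    case True
    have "SN p w f = 0" unfolding SN_def using True p1 by simp
    then show ?thesis unfolding Ff by (simp add: enn_rpow_def)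
  next
    case False
    then obtain i0 where i0: "i0 \<ge> 1" "f i0 > 0" using f0 by (metis le_less)
    define h where "h = (\<lambda>j. f j powr (p - 1) * w j)"
    have h0: "\<And>j. j \<ge> 1 \<Longrightarrow> h j \<ge> 0" unfolding h_def using w0' by simp
    have hi0: "h i0 > 0" unfolding h_def using i0 wp[OF i0(1)] by simp
    have SNeq: "SN q \<sigma> h = SN p w f"
      unfolding SN_def
    proof (rule suminf_cong)
      fix k
      define j where "j = Suc k"
      have wj: "w j > 0" using wp[of j] by (simp add: j_def)
      have fj: "f j \<ge> 0" using f0[of j] by (simp add: j_def)
      have "\<sigma> j * h j powr q = w j powr (1 - q) * ((f j powr (p - 1)) powr q * w j powr q)"
        unfolding h_def using rel[of j] wj fj by (simp add: j_def powr_mult)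
      also have "(f j powr (p - 1)) powr q = f j powr p" using p1 by (simp add: powr_powr q_def)
      also have "w j powr (1 - q) * (f j powr p * w j powr q) = (w j powr (1 - q) * w j powr q) * f j powr p" by simp
      also have "w j powr (1 - q) * w j powr q = w j" using wj by (simp add: powr_add[symmetric])
      finally show "ennreal (\<sigma> (Suc k) * h (Suc k) powr q) = ennreal (w (Suc k) * f (Suc k) powr p)"
        by (simp add: j_def)
    qed
    have "SN p w f \<noteq> top" using assms(9) unfolding Ff by (auto simp: top_unique)
    then obtain Fr where Fr: "SN p w f = ennreal Fr" "Fr \<ge> 0" using ennreal_cases[of "SN p w f"] by auto
    have Frp: "Fr > 0"
    proof -
      have "w i0 * f i0 powr p \<le> Fr" by (rule term_le_SN_gen[OF Fr i0(1)])
      moreover have "w i0 * f i0 powr p > 0" using wp[OF i0(1)] i0 by simp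
      ultimately show ?thesis by simp
    qed
    have Sh: "SN q \<sigma> h = ennreal Fr" using SNeq Fr by simp
    have Kp: "R.K > 0"
    proof (rule ccontr)
      assume "\<not> R.K > 0"
      then have K0: "R.K = 0" using R.K0 by simp
      have "SN q \<sigma> (Mr h) \<le> ennreal (R.K powr q * Fr)" by (rule R.NB(2)[OF h0 Sh Fr(2)])
      then have "SN q \<sigma> (Mr h) = ennreal 0" using K0 by simp
      then have "\<sigma> 1 * Mr h 1 powr q \<le> 0" by (rule term_le_SN_gen) auto
      then have "Mr h 1 powr q \<le> 0" using sp[of 1] by (simp add: mult_le_0_iff)
      then have M0: "Mr h 1 = 0" using powr_ge_zero[of "Mr h 1" q] by simp
      have "maxop h 1 = ennreal (Mr h 1)" using R.NB(1)[OF h0 Sh Fr(2), of 1] by simp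
      then have mx0: "maxop h 1 = 0" using M0 by simp
      have "(\<Sum>j=1..i0. \<bar>h j\<bar>) \<ge> \<bar>h i0\<bar>" using i0 by (intro member_le_sum) auto
      then have pos: "(\<Sum>j=1..i0. \<bar>h j\<bar>) / i0 > 0" using hi0 i0 by simp
      have "ennreal ((\<Sum>j=1..i0. \<bar>h j\<bar>) / i0) \<le> maxop h 1"
        unfolding maxop_def by (rule SUP_upper) (use i0 in auto)
      then have "ennreal ((\<Sum>j=1..i0. \<bar>h j\<bar>) / i0) = 0" using mx0 by simp
      then have "(\<Sum>j=1..i0. \<bar>h j\<bar>) / i0 \<le> 0" by (simp only: ennreal_eq_0_iff)
      then show False using pos by linarith
    qed
    define Hh where "Hh = R.H h"
    have HA1: "\<And>j n. 1 \<le> j \<Longrightarrow> j \<le> n \<Longrightarrow> (\<Sum>m=1..n. Hh m) / n \<le> 2 * R.K * Hh j"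
      unfolding Hh_def by (rule R.H_A1[OF h0 Sh Fr(2) Kp])
    have Hge: "\<And>j. j \<ge> 1 \<Longrightarrow> h j \<le> Hh j" unfolding Hh_def by (rule R.H_ge[OF h0 Sh Fr(2) Kp])
    have Hnorm: "\<And>J. (\<Sum>j=1..J. \<sigma> j * Hh j powr q) \<le> 2 powr q * Fr"
      unfolding Hh_def by (rule R.H_norm_part[OF h0 Sh Fr(2) Kp])
    have Hp: "Hh j > 0" if j: "j \<ge> 1" for j
    proof -
      define n where "n = max j i0"
      have "(\<Sum>m=1..n. h m) \<le> (\<Sum>m=1..n. Hh m)" using Hge by (intro sum_mono) auto
      moreover have "h i0 \<le> (\<Sum>m=1..n. h m)" using i0 h0 by (intro member_le_sum) (auto simp: n_def)
      ultimately have "(\<Sum>m=1..n. Hh m) > 0" using hi0 by simp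
      then have "(\<Sum>m=1..n. Hh m) / n > 0" using j by (simp add: n_def)
      moreover have "(\<Sum>m=1..n. Hh m) / n \<le> 2 * R.K * Hh j" using HA1[of j n] j by (simp add: n_def)
      ultimately have "2 * R.K * Hh j > 0" by linarith
      then show ?thesis using Kp by (simp add: zero_less_mult_iff)
    qed
    define w0 where "w0 = (\<lambda>k. w k powr b * Hh k powr a)"
    have w0p: "w0 k > 0" if "k \<ge> 1" for k
      using wp[OF that] Hp[OF that] by (simp add: w0_def)
    have Xge: "X \<ge> 0" by (simp add: X_def)
    have termb: "(1 / real n * (\<Sum>k=1..n. w0 k)) * (1 / real n * (\<Sum>k=1..n. w0 k powr (- 1 / (p0 - 1)))) powr (p0 - 1) \<le> X"
      if n: "n \<ge> 1" for n
      unfolding w0_def X_def a_def b_def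
      by (rule w0_term[OF p0 wp Hp Kp HA1 Wc[OF n] n])
    have AqX: "Aq_char p0 w0 \<le> ennreal X"
      unfolding Aq_char_def by (rule SUP_least) (use termb in \<open>auto intro: ennreal_leI\<close>)
    have inA: "in_Aq p0 w0"
      unfolding in_Aq_def is_weight_def using w0p AqX by (auto simp: top.not_eq_extremum intro: le_less_trans)
    define A0 where "A0 = Aq_const p0 w0"
    have A0X: "A0 \<le> X"
    proof -
      have "enn2real (Aq_char p0 w0) \<le> enn2real (ennreal X)" using AqX by (intro enn2real_mono) auto
      then show ?thesis using Xge by (simp add: A0_def Aq_const_def)
    qed
    have A01: "A0 \<ge> 1"
    proof -
      have w01: "w0 1 > 0" using w0p by simp
      have "(w0 1 powr (- 1 / (p0 - 1))) powr (p0 - 1) = w0 1 powr (- 1)"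
        using p0 by (simp add: powr_powr)
      then have "(1 / real 1 * (\<Sum>k=1..1. w0 k)) * (1 / real 1 * (\<Sum>k=1..1. w0 k powr (- 1 / (p0 - 1)))) powr (p0 - 1) = 1"
        using w01 by (simp add: powr_minus)
      moreover have "ennreal ((1 / real 1 * (\<Sum>k=1..1. w0 k)) * (1 / real 1 * (\<Sum>k=1..1. w0 k powr (- 1 / (p0 - 1)))) powr (p0 - 1)) \<le> Aq_char p0 w0"
        unfolding Aq_char_def by (rule SUP_upper) auto
      ultimately have "ennreal 1 \<le> Aq_char p0 w0" by simp
      then show ?thesis unfolding A0_def Aq_const_def using AqX by (intro enn_le_real) (auto simp: top_unique)
    qed
    have phiA0: "\<phi> A0 > 0" using assms(5) A01 by auto
    have phiX: "\<phi> A0 \<le> \<phi> X" using assms(6) A01 A0X by (auto intro: mono_onD)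
    have hyp: "wnorm p0 w0 (\<lambda>k. ennreal (f k)) \<le> ennreal (\<phi> A0) * wnorm p0 w0 (\<lambda>k. ennreal (g k))"
      using assms(7) inA by (simp add: A0_def)
    have w0nn: "\<And>k. k \<ge> 1 \<Longrightarrow> w0 k \<ge> 0" using w0p less_imp_le by blast
    have ab: "a + b = 1"
    proof -
      have "a + b = ((p - p0) + (p0 - 1)) / (p - 1)" unfolding a_def b_def by (rule add_divide_distrib[symmetric])
      then show ?thesis using p1 by simp
    qed
    have a0: "a > 0" and b0: "b > 0" using p0 by (auto simp: a_def b_def)
    have ptf: "w j * f j powr p \<le> w0 j * f j powr p0" if j: "j \<ge> 1" for j
    proof (cases "f j = 0")
      case True then show ?thesis using p0 by simp
    next
      case False
      then have fj: "f j > 0" using f0[OF j] by simp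
      have wj: "w j > 0" using wp[OF j] .
      have "w j * f j powr p = w j powr b * h j powr a * f j powr p0"
      proof -
        have "w j powr b * h j powr a * f j powr p0 = w j powr b * ((f j powr (p - 1)) powr a * w j powr a) * f j powr p0"
          unfolding h_def using fj wj by (simp add: powr_mult)
        also have "(f j powr (p - 1)) powr a = f j powr (p - p0)" using p1 by (simp add: powr_powr a_def)
        also have "w j powr b * (f j powr (p - p0) * w j powr a) * f j powr p0 = (w j powr a * w j powr b) * (f j powr (p - p0) * f j powr p0)"
          by (simp add: mult_ac)
        also have "w j powr a * w j powr b = w j" using wj ab by (simp add: powr_add[symmetric])
        also have "f j powr (p - p0) * f j powr p0 = f j powr p" using fj by (simp add: powr_add[symmetric])
        finally show ?thesis by simp
      qed
      also have "\<dots> \<le> w j powr b * Hh j powr a * f j powr p0"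
        using Hge[OF j] h0[OF j] a0 by (intro mult_right_mono mult_left_mono powr_mono2) auto
      finally show ?thesis by (simp add: w0_def)
    qed
    have SNf: "SN p w f \<le> SN p0 w0 f"
      unfolding SN_def
    proof (rule suminf_le)
      fix k show "ennreal (w (Suc k) * f (Suc k) powr p) \<le> ennreal (w0 (Suc k) * f (Suc k) powr p0)"
        using ptf[of "Suc k"] by (intro ennreal_leI) simp
    qed auto
    have LHS: "ennreal (Fr powr (1/p0)) \<le> wnorm p0 w0 (\<lambda>k. ennreal (f k))"
    proof -
      have "ennreal (Fr powr (1/p0)) = enn_rpow (SN p w f) (1/p0)" using Fr by (simp add: enn_rpow_ennreal)
      also have "\<dots> \<le> enn_rpow (SN p0 w0 f) (1/p0)" using SNf p0 by (intro enn_rpow_mono) auto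
      also have "\<dots> = wnorm p0 w0 (\<lambda>k. ennreal (f k))" by (rule wnorm_SN[symmetric, OF w0nn f0])
      finally show ?thesis .
    qed
    have cpos: "2 powr e2 * \<phi> X > 0" using phiA0 phiX by simp
    show ?thesis
    proof (cases "SN p w g = top")
      case True
      have phiXp: "\<phi> X > 0" using phiA0 phiX by linarith
      have "ennreal (2 powr e2 * \<phi> X) * wnorm p w (\<lambda>k. ennreal (g k)) = top"
        unfolding Gg True using cpos phiXp by (simp add: ennreal_mult_top)
      then show ?thesis by simp
    next
      case False
      then obtain Gr where Gr: "SN p w g = ennreal Gr" "Gr \<ge> 0" using ennreal_cases[of "SN p w g"] by auto
      define \<theta> where "\<theta> = p0 / p"
      have th: "0 < \<theta>" "\<theta> < 1" using p0 by (auto simp: \<theta>_def)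
      have e_a: "q * (1 - \<theta>) = a" using p0 p1 by (simp add: q_def \<theta>_def a_def field_simps)
      have e_b: "\<theta> + (1 - q) * (1 - \<theta>) = b" using p0 p1 by (simp add: q_def \<theta>_def b_def field_simps)
      have e_p: "p * \<theta> = p0" using p1 by (simp add: \<theta>_def)
      have ptg: "w0 j * g j powr p0 = (w j * g j powr p) powr \<theta> * (\<sigma> j * Hh j powr q) powr (1 - \<theta>)"
        if j: "j \<ge> 1" for j
      proof -
        have wj: "w j > 0" and sj: "\<sigma> j > 0" and hj: "Hh j > 0" and gj: "g j \<ge> 0" using wp sp Hp g0 j by auto
        have "(w j * g j powr p) powr \<theta> * (\<sigma> j * Hh j powr q) powr (1 - \<theta>)
            = (w j powr \<theta> * \<sigma> j powr (1 - \<theta>)) * ((g j powr p) powr \<theta> * (Hh j powr q) powr (1 - \<theta>))"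
          using wj sj hj gj by (simp add: powr_mult)
        also have "(g j powr p) powr \<theta> = g j powr p0" using e_p by (simp add: powr_powr)
        also have "(Hh j powr q) powr (1 - \<theta>) = Hh j powr a" using e_a by (simp add: powr_powr)
        also have "\<sigma> j powr (1 - \<theta>) = w j powr ((1 - q) * (1 - \<theta>))" using rel[OF j] by (simp add: powr_powr)
        also have "w j powr \<theta> * w j powr ((1 - q) * (1 - \<theta>)) = w j powr b" using e_b wj by (simp add: powr_add[symmetric])
        finally show ?thesis by (simp add: w0_def mult_ac)
      qed
      define B where "B = Gr powr \<theta> * (2 powr q * Fr) powr (1 - \<theta>)"
      have B0: "B \<ge> 0" by (simp add: B_def)
      have part: "(\<Sum>j=1..N. w0 j * g j powr p0) \<le> B" for N
      proof -
        have "(\<Sum>j=1..N. w0 j * g j powr p0) = (\<Sum>j=1..N. (w j * g j powr p) powr \<theta> * (\<sigma> j * Hh j powr q) powr (1 - \<theta>))"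
          using ptg by (intro sum.cong) auto
        also have "\<dots> \<le> (\<Sum>j=1..N. w j * g j powr p) powr \<theta> * (\<Sum>j=1..N. \<sigma> j * Hh j powr q) powr (1 - \<theta>)"
          by (rule holder_theta[OF _ th]) (auto intro!: mult_nonneg_nonneg w0' less_imp_le[OF sp])
        also have "\<dots> \<le> Gr powr \<theta> * (2 powr q * Fr) powr (1 - \<theta>)"
        proof (rule mult_mono)
          have "(\<Sum>j=1..N. w j * g j powr p) \<le> Gr"
            by (rule partial_le[where a="\<lambda>j. w j * g j powr p"]) (use Gr in \<open>auto intro!: mult_nonneg_nonneg w0' simp: SN_def\<close>)
          then show "(\<Sum>j=1..N. w j * g j powr p) powr \<theta> \<le> Gr powr \<theta>"
            using th by (intro powr_mono2) (auto intro!: sum_nonneg mult_nonneg_nonneg w0')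
          show "(\<Sum>j=1..N. \<sigma> j * Hh j powr q) powr (1 - \<theta>) \<le> (2 powr q * Fr) powr (1 - \<theta>)"
            using th Hnorm by (intro powr_mono2) (auto intro!: sum_nonneg mult_nonneg_nonneg less_imp_le[OF sp])
        qed auto
        finally show ?thesis by (simp add: B_def)
      qed
      have SNg: "SN p0 w0 g \<le> ennreal B"
        unfolding SN_def
      proof (rule suminf_le_const)
        fix N
        have "(\<Sum>k<N. ennreal (w0 (Suc k) * g (Suc k) powr p0)) = (\<Sum>k=1..N. ennreal (w0 k * g k powr p0))"
          by (rule sum_Suc_shift)
        also have "\<dots> = ennreal (\<Sum>k=1..N. w0 k * g k powr p0)"
          by (subst sum_ennreal) (auto intro!: mult_nonneg_nonneg w0nn)
        also have "\<dots> \<le> ennreal B" by (intro ennreal_leI part)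
        finally show "(\<Sum>k<N. ennreal (w0 (Suc k) * g (Suc k) powr p0)) \<le> ennreal B" .
      qed simp
      have RHSb: "wnorm p0 w0 (\<lambda>k. ennreal (g k)) \<le> ennreal (B powr (1/p0))"
      proof -
        have "wnorm p0 w0 (\<lambda>k. ennreal (g k)) = enn_rpow (SN p0 w0 g) (1/p0)" by (rule wnorm_SN[OF w0nn g0])
        also have "\<dots> \<le> enn_rpow (ennreal B) (1/p0)" using SNg p0 by (intro enn_rpow_mono) auto
        also have "\<dots> = ennreal (B powr (1/p0))" using B0 by (simp add: enn_rpow_ennreal)
        finally show ?thesis .
      qed
      have "ennreal (Fr powr (1/p0)) \<le> ennreal (\<phi> A0) * ennreal (B powr (1/p0))"
        using LHS hyp RHSb by (meson mult_left_mono order_trans zero_le)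
      also have "\<dots> = ennreal (\<phi> A0 * B powr (1/p0))" using phiA0 by (simp add: ennreal_mult)
      finally have r1: "Fr powr (1/p0) \<le> \<phi> A0 * B powr (1/p0)"
        using phiA0 by (simp add: ennreal_le_iff)
      define d where "d = (1 - \<theta>) / p0"
      have Bp: "B powr (1/p0) = Gr powr (1/p) * 2 powr e2 * Fr powr d"
      proof -
        have "B powr (1/p0) = (Gr powr \<theta>) powr (1/p0) * ((2 powr q) powr (1 - \<theta>) * Fr powr (1 - \<theta>)) powr (1/p0)"
          unfolding B_def using Gr Fr by (simp add: powr_mult)
        also have "\<dots> = Gr powr (\<theta> / p0) * (2 powr (q * (1 - \<theta>) / p0) * Fr powr d)"
          using Fr by (simp add: powr_mult powr_powr d_def)
        also have "\<theta> / p0 = 1 / p" using p0 by (simp add: \<theta>_def)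
        also have "q * (1 - \<theta>) / p0 = e2" using p0 p1 by (simp add: q_def \<theta>_def e2_def field_simps)
        finally show ?thesis by (simp add: mult_ac)
      qed
      have Fp: "Fr powr (1/p0) = Fr powr (1/p) * Fr powr d"
      proof -
        have "1/p0 = 1/p + d" using p0 p1 by (simp add: d_def \<theta>_def field_simps)
        then show ?thesis using Frp by (simp add: powr_add)
      qed
      have "Fr powr (1/p) * Fr powr d \<le> (\<phi> X * Gr powr (1/p) * 2 powr e2) * Fr powr d"
      proof -
        have "Fr powr (1/p) * Fr powr d \<le> \<phi> A0 * (Gr powr (1/p) * 2 powr e2 * Fr powr d)" using r1 Fp Bp by simp
        also have "\<dots> \<le> \<phi> X * (Gr powr (1/p) * 2 powr e2 * Fr powr d)" using phiX by (intro mult_right_mono) auto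
        finally show ?thesis by (simp add: mult_ac)
      qed
      then have fin: "Fr powr (1/p) \<le> 2 powr e2 * \<phi> X * Gr powr (1/p)"
        using Frp by (simp add: mult_le_cancel_right mult_ac)
      have "wnorm p w (\<lambda>k. ennreal (f k)) = ennreal (Fr powr (1/p))" unfolding Ff Fr using Fr by (simp add: enn_rpow_ennreal)
      also have "\<dots> \<le> ennreal (2 powr e2 * \<phi> X * Gr powr (1/p))" using fin by (rule ennreal_leI)
      also have "\<dots> = ennreal (2 powr e2 * \<phi> X) * wnorm p w (\<lambda>k. ennreal (g k))"
        unfolding Gg Gr using Gr cpos by (simp add: enn_rpow_ennreal ennreal_mult)
      finally show ?thesis .
    qed
  qed
  show ?thesis using main unfolding Xeq e2_def .
qed

end
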